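(* Let $L$ be a link. For every $n \ge 2$, $\beta_2(L) \le \beta_n(L)$.
   Context: An $n$-crossing ($n\ge 2$) in a link projection is a point where $n$ strands meet, each bisecting the crossing, with the strands assigned distinct levels $1,\dots,n$ (level $1$ on top) recording their heights. An $m$-string $n$-crossing braid is a braid diagram on $m$ strings all of whose crossings are $n$-crossings; each such crossing involves strings in consecutive positions $j,\dots,j+n-1$ and reverses their order. A $2$-crossing braid is an ordinary braid. The $n$-crossing braid index $\beta_n(L)$ is the minimum number of strings of an $n$-crossing braid whose closure is isotopic to $L$, and $\beta_n(L)=\infty$ if no such braid exists. Thus $\beta_2(L)$ is the usual braid index. *)

theory Defs
  imports "HOL-Analysis.Analysis" "HOL-Library.Extended_Nat"
begin

type_synonym pt3 = "real \<times> real \<times> real"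

definition is_link :: "pt3 set \<Rightarrow> bool" where
  "is_link L \<longleftrightarrow> (\<exists>(k::nat) (c :: nat \<Rightarrow> real \<Rightarrow> pt3). k \<ge> 1 \<and>
      (\<forall>i<k. simple_path (c i) \<and> pathfinish (c i) = pathstart (c i)) \<and>
      (\<forall>i<k. \<forall>j<k. i \<noteq> j \<longrightarrow> path_image (c i) \<inter> path_image (c j) = {}) \<and>
      L = (\<Union>i<k. path_image (c i)))"

definition isotopic :: "pt3 set \<Rightarrow> pt3 set \<Rightarrow> bool" where
  "isotopic L L' \<longleftrightarrow> (\<exists>H :: real \<times> pt3 \<Rightarrow> pt3.
      continuous_on ({0..1} \<times> UNIV) H \<and>
      (\<forall>t\<in>{0..1}. \<exists>g. homeomorphism UNIV UNIV (\<lambda>x. H (t, x)) g) \<and>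
      (\<forall>x. H (0, x) = x) \<and>
      (\<lambda>x. H (1, x)) ` L = L')"

text \<open>A geometric m-string braid: string i is t \<mapsto> (t, x_i(t), z_i(t)), where
  x is the position coordinate (seen in the projection) and z the height.
  We require x > 0 so that the braid can be closed by rotating around the z-axis.\<close>
definition geom_braid :: "nat \<Rightarrow> (nat \<Rightarrow> real \<Rightarrow> real \<times> real) \<Rightarrow> bool" where
  "geom_braid m s \<longleftrightarrow> m \<ge> 1 \<and>
     (\<forall>i<m. continuous_on {0..1} (s i)) \<and>
     (\<forall>i<m. \<forall>t\<in>{0..1}. fst (s i t) > 0) \<and>
     (\<forall>i<m. \<forall>j<m. i \<noteq> j \<longrightarrow> (\<forall>t\<in>{0..1}. s i t \<noteq> s j t)) \<and>
     (\<lambda>i. s i 0) ` {..<m} = (\<lambda>i. s i 1) ` {..<m}"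

definition wrap :: "real \<Rightarrow> real \<times> real \<Rightarrow> pt3" where
  "wrap t p = (fst p * cos (2 * pi * t), fst p * sin (2 * pi * t), snd p)"

text \<open>The closure of the braid, as a subset of R^3; its projection to the plane
  of the first two coordinates is the closed braid diagram.\<close>
definition braid_closure :: "nat \<Rightarrow> (nat \<Rightarrow> real \<Rightarrow> real \<times> real) \<Rightarrow> pt3 set" where
  "braid_closure m s = (\<Union>i<m. (\<lambda>t. wrap t (s i t)) ` {0..1})"

definition crossing_times :: "nat \<Rightarrow> (nat \<Rightarrow> real \<Rightarrow> real \<times> real) \<Rightarrow> real set" where
  "crossing_times m s = {t\<in>{0..1}. \<exists>i<m. \<exists>j<m. i \<noteq> j \<and> fst (s i t) = fst (s j t)}"

definition strands_at :: "nat \<Rightarrow> (nat \<Rightarrow> real \<Rightarrow> real \<times> real) \<Rightarrow> real \<Rightarrow> real \<Rightarrow> nat set" where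
  "strands_at m s t x = {i. i < m \<and> fst (s i t) = x}"

text \<open>An m-string n-crossing braid: finitely many crossings, all in the interior;
  at each crossing point exactly n strands meet (with distinct heights, i.e. levels,
  automatically by disjointness of strings); just before the crossing these strands
  occupy consecutive positions (no other strand lies between them) and their order is
  reversed just after the crossing (each strand passes through the crossing).\<close>
definition n_crossing_braid :: "nat \<Rightarrow> nat \<Rightarrow> (nat \<Rightarrow> real \<Rightarrow> real \<times> real) \<Rightarrow> bool" where
  "n_crossing_braid n m s \<longleftrightarrow> geom_braid m s \<and>
     finite (crossing_times m s) \<and> crossing_times m s \<subseteq> {0<..<1} \<and>
     (\<forall>t\<in>crossing_times m s. \<forall>x. let I = strands_at m s t x in
        card I \<ge> 2 \<longrightarrow>
        (card I = n \<and>
         (\<exists>\<epsilon>>0. \<forall>t1\<in>{t-\<epsilon><..<t}. \<forall>t2\<in>{t<..<t+\<epsilon>}.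
            (\<forall>i\<in>I. \<forall>j\<in>I. fst (s i t1) < fst (s j t1) \<longleftrightarrow> fst (s j t2) < fst (s i t2)) \<and>
            (\<forall>k<m. k \<notin> I \<longrightarrow>
               ((\<forall>i\<in>I. fst (s k t1) < fst (s i t1)) \<or> (\<forall>i\<in>I. fst (s i t1) < fst (s k t1))) \<and>
               ((\<forall>i\<in>I. fst (s k t2) < fst (s i t2)) \<or> (\<forall>i\<in>I. fst (s i t2) < fst (s k t2)))))))"

text \<open>The n-crossing braid index (infinity if no such braid exists).\<close>
definition crossing_braid_index :: "nat \<Rightarrow> pt3 set \<Rightarrow> enat" where
  "crossing_braid_index n L =
     Inf {enat m | m. \<exists>s. n_crossing_braid n m s \<and> isotopic (braid_closure m s) L}"

end

theory Submission
  imports Defs "HOL-Homology.Invariance_of_Domain"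
begin


definition cpx :: "pt3 \<Rightarrow> complex" where
  "cpx p = complex_of_real (fst p) + \<i> * complex_of_real (fst (snd p))"

lemma cpx_cont: "continuous_on S cpx"
  unfolding cpx_def by (intro continuous_intros)

lemma Re_cpx[simp]: "Re (cpx p) = fst p" and Im_cpx[simp]: "Im (cpx p) = fst (snd p)"
  by (simp_all add: cpx_def)

lemma cos_le_max:
  assumes "\<alpha> \<le> \<theta>" "\<theta> \<le> \<beta>" "0 \<le> \<alpha>" "\<beta> \<le> 2*pi"
  shows "cos \<theta> \<le> max (cos \<alpha>) (cos \<beta>)"
proof (cases "\<theta> \<le> pi")
  case True
  then have "cos \<theta> \<le> cos \<alpha>" using assms by (intro cos_monotone_0_pi_le) auto
  then show ?thesis by simp
next
  case False
  have "cos (2*pi - \<theta>) \<le> cos (2*pi - \<beta>)" using assms False by (intro cos_monotone_0_pi_le) auto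
  then have "cos \<theta> \<le> cos \<beta>" by (simp add: cos_diff)
  then show ?thesis by simp
qed

lemma cos_lt_1: assumes "0 < x" "x < 2*pi" shows "cos x < 1"
proof (cases "x \<le> pi")
  case True
  then have "cos x < cos 0" using assms by (intro cos_monotone_0_pi) auto
  then show ?thesis by simp
next
  case False
  have "cos (2*pi - x) < cos 0" using assms False by (intro cos_monotone_0_pi) auto
  then show ?thesis by (simp add: cos_diff)
qed

locale shiftfun =
  fixes \<psi> :: "real \<Rightarrow> real \<Rightarrow> real \<Rightarrow> real" and b c d :: real
  assumes cont: "continuous_on UNIV (\<lambda>q. \<psi> (fst q) (fst (snd q)) (snd (snd q)))"
    and b: "0 < b" and zb: "\<And>t x z. x \<le> b \<Longrightarrow> \<psi> t x z = 0"
    and c: "0 < c" and cd: "c \<le> d" and d: "d < 1"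
    and zt: "\<And>t x z. t < c \<or> d < t \<Longrightarrow> \<psi> t x z = 0"
    and lip: "\<And>t x y z. \<bar>\<psi> t x z - \<psi> t y z\<bar> \<le> \<bar>x - y\<bar> / 2"
begin

lemma shift_pos: assumes "0 < x" shows "0 < x + \<psi> t x z"
proof (cases "x \<le> b")
  case True then show ?thesis using assms zb by simp
next
  case False
  have "\<bar>\<psi> t x z - \<psi> t b z\<bar> \<le> \<bar>x - b\<bar> / 2" by (rule lip)
  then have "\<bar>\<psi> t x z\<bar> \<le> (x - b) / 2" using False zb[of b t z] by simp
  then show ?thesis using False b by (simp add: abs_le_iff)
qed

lemma shift_inj: assumes "x + \<psi> t x z = y + \<psi> t y z" shows "x = y"
proof -
  have "\<bar>x - y\<bar> = \<bar>\<psi> t y z - \<psi> t x z\<bar>" using assms by (simp add: algebra_simps)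
  also have "\<dots> \<le> \<bar>y - x\<bar> / 2" by (rule lip)
  finally show ?thesis by (simp add: abs_minus_commute)
qed

definition Eps :: "pt3 \<Rightarrow> real" where
  "Eps p = (if cpx p = 0 then 0 else
     \<psi> (Arg2pi (cpx p) / (2*pi)) (cmod (cpx p)) (snd (snd p)) / cmod (cpx p))"

definition Hm :: "real \<Rightarrow> pt3 \<Rightarrow> pt3" where
  "Hm \<tau> p = ((1 + \<tau> * Eps p) * fst p, (1 + \<tau> * Eps p) * fst (snd p), snd (snd p))"

lemma psi_bound: "\<bar>\<psi> t x z\<bar> \<le> \<bar>x - b\<bar> / 2"
  using lip[of t x z b] zb[of b t z] by simp

lemma Eps_small: assumes "cmod (cpx p) \<le> b" shows "Eps p = 0"
  using assms zb unfolding Eps_def by auto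

lemma cont_psi_comp:
  assumes "continuous_on S f" "continuous_on S g" "continuous_on S h"
  shows "continuous_on S (\<lambda>p. \<psi> (f p) (g p) (h p))"
proof -
  have "continuous_on S (\<lambda>p. (f p, g p, h p))" using assms by (intro continuous_intros)
  from continuous_on_compose2[OF cont this] show ?thesis by auto
qed

lemma Eps_cont: "continuous_on UNIV Eps"
proof -
  define \<kappa> :: real where "\<kappa> = max (cos (2 * pi * c)) (cos (2 * pi * d))"
  have k1: "\<kappa> < 1" unfolding \<kappa>_def using c cd d
    by (auto intro!: cos_lt_1)
  have kz: "Eps p = 0" if "\<kappa> * cmod (cpx p) < Re (cpx p)" for p
  proof (cases "cpx p = 0")
    case False
    have "cmod (cpx p) * cos (Arg2pi (cpx p)) = Re (cpx p)" by (rule cos_Arg2pi)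
    with that False have "\<kappa> < cos (Arg2pi (cpx p))"
      by (metis mult.commute mult_less_cancel_left_pos zero_less_norm_iff)
    moreover have "cos (Arg2pi (cpx p)) \<le> \<kappa>" if "c \<le> Arg2pi (cpx p) / (2*pi)" "Arg2pi (cpx p) / (2*pi) \<le> d"
      unfolding \<kappa>_def using that c d
      by (intro cos_le_max) (auto simp: field_simps)
    ultimately have "Arg2pi (cpx p) / (2*pi) < c \<or> d < Arg2pi (cpx p) / (2*pi)" by linarith
    then show ?thesis unfolding Eps_def using zt by simp
  qed (simp add: Eps_def)
  have "isCont Eps p" for p
  proof -
    consider "cmod (cpx p) < b" | "b/2 < cmod (cpx p)" "cpx p \<notin> \<real>\<^sub>\<ge>\<^sub>0" | "\<kappa> * cmod (cpx p) < Re (cpx p)"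
    proof (cases "cmod (cpx p) < b")
      case False
      then have pb: "b \<le> cmod (cpx p)" by simp
      show ?thesis
      proof (cases "cpx p \<in> \<real>\<^sub>\<ge>\<^sub>0")
        case True
        then have "Re (cpx p) = cmod (cpx p)" "Re (cpx p) > 0" using pb b
          by (auto simp: complex_nonneg_Reals_iff cmod_eq_Re)
        then show ?thesis using that(3) k1 by (metis mult_strict_right_mono mult_1 )
      qed (use that pb b in auto)
    qed (use that in auto)
    then show ?thesis
    proof cases
      case 1
      let ?U = "{p. cmod (cpx p) < b}"
      have "open ?U" using cpx_cont
        by (intro open_Collect_less continuous_intros) (auto intro: continuous_on_norm)
      moreover have "continuous_on ?U Eps"
        by (rule continuous_on_eq[where f="\<lambda>_. 0"]) (auto intro!: Eps_small dest: less_imp_le)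
      ultimately show ?thesis using 1 continuous_on_eq_continuous_at by blast
    next
      case 2
      let ?U = "{p. b/2 < cmod (cpx p)} \<inter> cpx -` (UNIV - \<real>\<^sub>\<ge>\<^sub>0)"
      have "open {p. b/2 < cmod (cpx p)}" using cpx_cont
        by (intro open_Collect_less continuous_intros) (auto intro: continuous_on_norm)
      moreover have "open (cpx -` (UNIV - \<real>\<^sub>\<ge>\<^sub>0))"
        by (rule open_vimage) (auto simp: open_Diff cpx_def intro!: continuous_intros)
      ultimately have "open ?U" by blast
      moreover have "continuous_on ?U Eps"
      proof (rule continuous_on_eq)
        have A: "continuous_on ?U (\<lambda>p. Arg2pi (cpx p))"
        proof (rule continuous_on_compose2[OF _ cpx_cont])
          show "continuous_on (UNIV - \<real>\<^sub>\<ge>\<^sub>0) Arg2pi"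
            using continuous_at_Arg2pi continuous_at_imp_continuous_within
            by (auto simp: continuous_on_eq_continuous_within)
        qed auto
        have N: "continuous_on ?U (\<lambda>p. cmod (cpx p))"
          by (intro continuous_on_norm cpx_cont)
        show "continuous_on ?U (\<lambda>p. \<psi> (Arg2pi (cpx p) / (2*pi)) (cmod (cpx p)) (snd (snd p)) / cmod (cpx p))"
          using b by (intro continuous_intros cont_psi_comp A N) auto
      qed (use b in \<open>auto simp: Eps_def\<close>)
      ultimately show ?thesis using 2 continuous_on_eq_continuous_at by blast
    next
      case 3
      let ?U = "{p. \<kappa> * cmod (cpx p) < Re (cpx p)}"
      have "open ?U" using cpx_cont
        by (intro open_Collect_less continuous_intros) (auto intro: continuous_on_norm)
      moreover have "continuous_on ?U Eps"
        by (rule continuous_on_eq[where f="\<lambda>_. 0"]) (use kz in auto)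
      ultimately show ?thesis using 3 continuous_on_eq_continuous_at by blast
    qed
  qed
  then show ?thesis by (simp add: continuous_at_imp_continuous_on)
qed


lemma pt3_eq_iff: "p = q \<longleftrightarrow> cpx p = cpx q \<and> snd (snd p) = snd (snd q)"
  by (cases p, cases q) (auto simp: complex_eq_iff)

lemma cpx_scale: "cpx (a * fst p, a * fst (snd p), z) = complex_of_real a * cpx p"
  by (simp add: complex_eq_iff)

lemma Eps_bound: "\<bar>Eps p\<bar> \<le> 1/2"
proof (cases "cmod (cpx p) \<le> b")
  case True then show ?thesis by (simp add: Eps_small)
next
  case False
  let ?r = "cmod (cpx p)"
  have "\<bar>\<psi> (Arg2pi (cpx p) / (2*pi)) ?r (snd (snd p))\<bar> \<le> \<bar>?r - b\<bar> / 2" by (rule psi_bound)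
  also have "\<dots> \<le> ?r / 2" using False b by simp
  finally show ?thesis using False b by (auto simp: Eps_def abs_divide divide_le_eq)
qed

lemma fac_pos: assumes "\<tau> \<in> {0..1}" shows "0 < 1 + \<tau> * Eps p"
proof -
  have "\<bar>\<tau> * Eps p\<bar> \<le> 1 * (1/2)" unfolding abs_mult
    using assms Eps_bound[of p] by (intro mult_mono) auto
  then show ?thesis by linarith
qed

lemma cpx_Hm: "cpx (Hm \<tau> p) = complex_of_real (1 + \<tau> * Eps p) * cpx p"
  unfolding Hm_def by (rule cpx_scale)

lemma z_Hm[simp]: "snd (snd (Hm \<tau> p)) = snd (snd p)"
  by (simp add: Hm_def)

lemma Hm_0: "Hm 0 p = p"
  by (cases p) (simp add: Hm_def)

lemma Hm_cont: "continuous_on ({0..1} \<times> UNIV) (\<lambda>q. Hm (fst q) (snd q))"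
proof -
  have E: "continuous_on ({0..1} \<times> UNIV) (\<lambda>q. Eps (snd q))"
    by (rule continuous_on_compose2[OF Eps_cont]) (auto intro: continuous_intros)
  show ?thesis unfolding Hm_def
    by (intro continuous_intros E)
qed

lemma rad_eq: assumes "cpx p \<noteq> 0"
  shows "cmod (cpx p) * (1 + \<tau> * Eps p) = cmod (cpx p) + \<tau> * \<psi> (Arg2pi (cpx p) / (2*pi)) (cmod (cpx p)) (snd (snd p))"
  using assms by (simp add: Eps_def field_simps)

lemma Hm_inj: assumes tau: "\<tau> \<in> {0..1}" shows "inj (Hm \<tau>)"
proof (rule injI)
  fix p q assume eq: "Hm \<tau> p = Hm \<tau> q"
  define \<alpha> where "\<alpha> = 1 + \<tau> * Eps p"
  define \<beta> where "\<beta> = 1 + \<tau> * Eps q"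
  have ap: "\<alpha> > 0" "\<beta> > 0" unfolding \<alpha>_def \<beta>_def using fac_pos tau by auto
  have z: "snd (snd p) = snd (snd q)" using arg_cong[OF eq, of "\<lambda>x. snd (snd x)"] by simp
  have c: "complex_of_real \<alpha> * cpx p = complex_of_real \<beta> * cpx q"
    using arg_cong[OF eq, of cpx] by (simp add: cpx_Hm \<alpha>_def \<beta>_def)
  show "p = q"
  proof (cases "cpx p = 0")
    case True
    then have "cpx q = 0" using c ap by auto
    then show ?thesis using True z pt3_eq_iff by auto
  next
    case False
    then have q0: "cpx q \<noteq> 0" using c ap by auto
    have A: "Arg2pi (cpx p) = Arg2pi (cpx q)"
      using c ap Arg2pi_times_of_real by metis
    have "cmod (complex_of_real \<alpha> * cpx p) = cmod (complex_of_real \<beta> * cpx q)" using c by simp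
    then have n: "cmod (cpx p) * \<alpha> = cmod (cpx q) * \<beta>" using ap by (simp add: norm_mult mult.commute)
    let ?t = "Arg2pi (cpx p) / (2*pi)" and ?z = "snd (snd p)"
    have "cmod (cpx p) + \<tau> * \<psi> ?t (cmod (cpx p)) ?z = cmod (cpx q) + \<tau> * \<psi> ?t (cmod (cpx q)) ?z"
      using n rad_eq[OF False, of \<tau>] rad_eq[OF q0, of \<tau>] A z by (simp add: \<alpha>_def \<beta>_def)
    then have "\<bar>cmod (cpx p) - cmod (cpx q)\<bar> = \<tau> * \<bar>\<psi> ?t (cmod (cpx p)) ?z - \<psi> ?t (cmod (cpx q)) ?z\<bar>"
    proof -
      assume h: "cmod (cpx p) + \<tau> * \<psi> ?t (cmod (cpx p)) ?z = cmod (cpx q) + \<tau> * \<psi> ?t (cmod (cpx q)) ?z"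
      have "cmod (cpx p) - cmod (cpx q) = \<tau> * (\<psi> ?t (cmod (cpx q)) ?z - \<psi> ?t (cmod (cpx p)) ?z)"
        using h by (simp add: right_diff_distrib)
      then show ?thesis using tau by (simp add: abs_mult abs_minus_commute)
    qed
    also have "\<dots> \<le> 1 * (\<bar>cmod (cpx p) - cmod (cpx q)\<bar> / 2)"
      using tau lip by (intro mult_mono) auto
    finally have r: "cmod (cpx p) = cmod (cpx q)" by simp
    then have "\<alpha> = \<beta>" using n False q0 by simp
    then have "cpx p = cpx q" using c ap by simp
    then show ?thesis using z pt3_eq_iff by auto
  qed
qed

lemma Hm_surj: assumes tau: "\<tau> \<in> {0..1}" shows "surj (Hm \<tau>)"
proof -
  have "q \<in> range (Hm \<tau>)" for q
  proof (cases "cmod (cpx q) \<le> b")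
    case True
    then have "Hm \<tau> q = q" by (cases q) (simp add: Hm_def Eps_small)
    then show ?thesis by (metis rangeI)
  next
    case False
    let ?R = "cmod (cpx q)" and ?t = "Arg2pi (cpx q) / (2*pi)" and ?z = "snd (snd q)"
    define f where "f r = r + \<tau> * \<psi> ?t r ?z" for r
    have fc: "continuous_on {b..2*?R} f" unfolding f_def
      by (intro continuous_intros cont_psi_comp) auto
    have fb: "f b \<le> ?R" using False zb by (simp add: f_def)
    have "\<bar>\<tau> * \<psi> ?t (2*?R) ?z\<bar> \<le> 1 * (\<bar>2*?R - b\<bar>/2)" unfolding abs_mult
      using tau psi_bound by (intro mult_mono) auto
    then have fR: "?R \<le> f (2*?R)" using False b by (simp add: f_def abs_le_iff)
    obtain r where r: "b \<le> r" "r \<le> 2*?R" "f r = ?R"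
      using IVT'[of f b ?R "2*?R", OF fb fR _ fc] False b by (smt (verit))
    have R0: "?R > 0" using False b by linarith
    have r0: "r > 0" using r b by linarith
    define p where "p = ((r/?R) * fst q, (r/?R) * fst (snd q), ?z)"
    have cp: "cpx p = complex_of_real (r/?R) * cpx q" unfolding p_def by (rule cpx_scale)
    have cp0: "cpx p \<noteq> 0" using cp R0 r0 by auto
    have np: "cmod (cpx p) = r" using cp R0 r0 by (simp add: norm_mult norm_divide)
    have Ap: "Arg2pi (cpx p) = Arg2pi (cpx q)" using cp R0 r0 by simp
    have zp: "snd (snd p) = ?z" by (simp add: p_def)
    have "r * (1 + \<tau> * Eps p) = ?R"
      using rad_eq[OF cp0, of \<tau>] np Ap zp r(3) by (simp add: f_def)
    then have "(1 + \<tau> * Eps p) * (r / ?R) = 1" using R0 by (simp add: field_simps)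
    moreover have "cpx (Hm \<tau> p) = complex_of_real ((1 + \<tau> * Eps p) * (r / ?R)) * cpx q"
      unfolding cpx_Hm cp of_real_mult by (simp only: mult.assoc)
    ultimately have "cpx (Hm \<tau> p) = cpx q" by (metis mult_1 of_real_1)
    then have "Hm \<tau> p = q" using pt3_eq_iff zp by auto
    then show ?thesis by (metis rangeI)
  qed
  then show ?thesis by auto
qed

lemma Hm_homeo: assumes tau: "\<tau> \<in> {0..1}" shows "\<exists>g. homeomorphism UNIV UNIV (Hm \<tau>) g"
proof -
  have "continuous_on UNIV (Hm \<tau>)"
    by (rule continuous_on_compose2[OF Hm_cont, of _ "\<lambda>p. (\<tau>, p)", simplified]) (use tau in \<open>auto intro: continuous_intros\<close>)
  then obtain g where "homeomorphism UNIV (Hm \<tau> ` UNIV) (Hm \<tau>) g"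
    using invariance_of_domain_homeomorphism[of UNIV "Hm \<tau>"] Hm_inj[OF tau] by auto
  then show ?thesis using Hm_surj[OF tau] by auto
qed


lemma cpx_wrap: "cpx (wrap t (x, z)) = complex_of_real x * exp (\<i> * complex_of_real (2 * pi * t))"
  by (simp add: wrap_def complex_eq_iff cos_exp_eq sin_exp_eq Re_exp Im_exp)

lemma z_wrap[simp]: "snd (snd (wrap t p)) = snd p"
  by (simp add: wrap_def)

lemma Hm_wrap: assumes t: "t \<in> {0..1}" and x: "x > 0"
  shows "Hm 1 (wrap t (x, z)) = wrap t (x + \<psi> t x z, z)"
proof (cases "t < 1")
  case True
  have A: "Arg2pi (cpx (wrap t (x, z))) = 2 * pi * t"
    unfolding cpx_wrap using t True x by (intro Arg2pi_unique) auto
  have N: "cmod (cpx (wrap t (x, z))) = x" unfolding cpx_wrap using x by (simp add: norm_mult)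
  have E: "Eps (wrap t (x, z)) = \<psi> t x z / x"
  proof -
    have C0: "cpx (wrap t (x, z)) \<noteq> 0" using N x by auto
    then show ?thesis unfolding Eps_def A N by simp
  qed
  show ?thesis unfolding Hm_def E using x by (simp add: wrap_def field_simps)
next
  case False
  then have t1: "t = 1" using t by simp
  have A: "Arg2pi (cpx (wrap t (x, z))) = 0"
    unfolding cpx_wrap t1 using x by (intro Arg2pi_unique[of x]) (auto simp: exp_eq_1)
  have E: "Eps (wrap t (x, z)) = 0"
    unfolding Eps_def A using zt c by simp
  have "\<psi> t x z = 0" using zt d t1 by simp
  then show ?thesis unfolding Hm_def E by (simp add: wrap_def)
qed

lemma Hm_closure: assumes "\<forall>i<m. \<forall>t\<in>{0..1}. fst (s i t) > 0"
  shows "Hm 1 ` braid_closure m s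
     = braid_closure m (\<lambda>i t. (fst (s i t) + \<psi> t (fst (s i t)) (snd (s i t)), snd (s i t)))"
proof -
  have "Hm 1 ` (\<lambda>t. wrap t (s i t)) ` {0..1} = (\<lambda>t. wrap t (fst (s i t) + \<psi> t (fst (s i t)) (snd (s i t)), snd (s i t))) ` {0..1}"
    if "i < m" for i
    unfolding image_image
  proof (rule image_cong[OF refl])
    fix t :: real assume "t \<in> {0..1}"
    then show "Hm 1 (wrap t (s i t)) = wrap t (fst (s i t) + \<psi> t (fst (s i t)) (snd (s i t)), snd (s i t))"
      using Hm_wrap[of t "fst (s i t)" "snd (s i t)"] assms that by simp
  qed
  then show ?thesis unfolding braid_closure_def image_UN by simp
qed

lemma shift_isotopy: assumes "\<forall>i<m. \<forall>t\<in>{0..1}. fst (s i t) > 0"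
  shows "\<exists>H :: real \<times> pt3 \<Rightarrow> pt3. continuous_on ({0..1} \<times> UNIV) H \<and>
      (\<forall>t\<in>{0..1}. \<exists>g. homeomorphism UNIV UNIV (\<lambda>x. H (t, x)) g) \<and>
      (\<forall>x. H (0, x) = x) \<and>
      (\<lambda>x. H (1, x)) ` braid_closure m s
       = braid_closure m (\<lambda>i t. (fst (s i t) + \<psi> t (fst (s i t)) (snd (s i t)), snd (s i t)))"
  by (rule exI[of _ "\<lambda>q. Hm (fst q) (snd q)"])
     (use Hm_cont Hm_homeo Hm_0 Hm_closure[OF assms] in auto)

end




definition revcond :: "nat \<Rightarrow> (nat \<Rightarrow> real \<Rightarrow> real \<times> real) \<Rightarrow> real \<Rightarrow> nat set \<Rightarrow> real \<Rightarrow> bool" where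
  "revcond m s t I \<epsilon> \<longleftrightarrow> (\<forall>t1\<in>{t-\<epsilon><..<t}. \<forall>t2\<in>{t<..<t+\<epsilon>}.
            (\<forall>i\<in>I. \<forall>j\<in>I. fst (s i t1) < fst (s j t1) \<longleftrightarrow> fst (s j t2) < fst (s i t2)) \<and>
            (\<forall>k<m. k \<notin> I \<longrightarrow>
               ((\<forall>i\<in>I. fst (s k t1) < fst (s i t1)) \<or> (\<forall>i\<in>I. fst (s i t1) < fst (s k t1))) \<and>
               ((\<forall>i\<in>I. fst (s k t2) < fst (s i t2)) \<or> (\<forall>i\<in>I. fst (s i t2) < fst (s k t2)))))"

definition good :: "nat \<Rightarrow> (nat \<Rightarrow> real \<Rightarrow> real \<times> real) \<Rightarrow> bool" where
  "good m s \<longleftrightarrow> geom_braid m s \<and> finite (crossing_times m s) \<and> crossing_times m s \<subseteq> {0<..<1} \<and>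
     (\<forall>t\<in>crossing_times m s. \<forall>x. card (strands_at m s t x) \<ge> 2 \<longrightarrow>
        (\<exists>\<epsilon>>0. revcond m s t (strands_at m s t x) \<epsilon>))"

definition badset :: "nat \<Rightarrow> (nat \<Rightarrow> real \<Rightarrow> real \<times> real) \<Rightarrow> (real \<times> real) set" where
  "badset m s = {(t, x). t \<in> crossing_times m s \<and> card (strands_at m s t x) \<ge> 3}"

lemma ncb_good: assumes "n_crossing_braid n m s" shows "good m s"
proof -
  have H: "\<forall>t\<in>crossing_times m s. \<forall>x. let I = strands_at m s t x in card I \<ge> 2 \<longrightarrow> (card I = n \<and> (\<exists>\<epsilon>>0. revcond m s t I \<epsilon>))"
    using assms unfolding n_crossing_braid_def revcond_def by simp
  then show ?thesis using assms unfolding good_def n_crossing_braid_def Let_def by simp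
qed

lemma good_2cb: assumes "good m s" "badset m s = {}" shows "n_crossing_braid 2 m s"
proof -
  have "card (strands_at m s t x) = 2" if "t \<in> crossing_times m s" "card (strands_at m s t x) \<ge> 2" for t x
  proof -
    have "(t, x) \<notin> badset m s" using assms(2) by simp
    then have "\<not> 3 \<le> card (strands_at m s t x)" using that(1) unfolding badset_def by simp
    then show ?thesis using that(2) by linarith
  qed
  moreover have "\<forall>t\<in>crossing_times m s. \<forall>x. card (strands_at m s t x) \<ge> 2 \<longrightarrow> (\<exists>\<epsilon>>0. revcond m s t (strands_at m s t x) \<epsilon>)"
    using assms(1) unfolding good_def by simp
  ultimately have "\<forall>t\<in>crossing_times m s. \<forall>x. let I = strands_at m s t x in card I \<ge> 2 \<longrightarrow> (card I = 2 \<and> (\<exists>\<epsilon>>0. revcond m s t I \<epsilon>))"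
    by (simp add: Let_def)
  then show ?thesis using assms(1) unfolding n_crossing_braid_def good_def revcond_def by simp
qed

lemma badset_finite: assumes "finite (crossing_times m s)" shows "finite (badset m s)"
proof -
  have "badset m s \<subseteq> (\<lambda>(t, i). (t, fst (s i t))) ` (crossing_times m s \<times> {..<m})"
  proof
    fix p assume "p \<in> badset m s"
    then obtain t x where p: "p = (t, x)" "t \<in> crossing_times m s" "card (strands_at m s t x) \<ge> 3"
      unfolding badset_def by auto
    then have "strands_at m s t x \<noteq> {}" by auto
    then obtain i where "i < m" "fst (s i t) = x" unfolding strands_at_def by auto
    then show "p \<in> (\<lambda>(t, i). (t, fst (s i t))) ` (crossing_times m s \<times> {..<m})"
      using p by force
  qed
  then show ?thesis using assms by (meson finite_SigmaI finite_imageI finite_lessThan finite_subset)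
qed

lemma braid_closure_cong: "(\<And>i t. i < m \<Longrightarrow> t \<in> {0..1} \<Longrightarrow> s i t = s' i t) \<Longrightarrow> braid_closure m s = braid_closure m s'"
  unfolding braid_closure_def by (intro SUP_cong image_cong) auto

lemma isotopic_pre:
  fixes G :: "real \<times> pt3 \<Rightarrow> pt3"
  assumes G: "continuous_on ({0..1} \<times> UNIV) G" "\<forall>t\<in>{0..1}. \<exists>g. homeomorphism UNIV UNIV (\<lambda>x. G (t, x)) g"
     "\<forall>x. G (0, x) = x" "(\<lambda>x. G (1, x)) ` A = B"
   and iso: "isotopic B L"
  shows "isotopic A L"
proof -
  obtain H :: "real \<times> pt3 \<Rightarrow> pt3" where H0: "continuous_on ({0..1} \<times> UNIV) H \<and> (\<forall>t\<in>{0..1}. \<exists>g. homeomorphism UNIV UNIV (\<lambda>x. H (t, x)) g) \<and>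
     (\<forall>x. H (0, x) = x) \<and> (\<lambda>x. H (1, x)) ` B = L"
    using iso[unfolded isotopic_def] by (elim exE) assumption
  note H = conjunct1[OF H0] conjunct1[OF conjunct2[OF H0]] conjunct1[OF conjunct2[OF conjunct2[OF H0]]]
    conjunct2[OF conjunct2[OF conjunct2[OF H0]]]
  define K where "K q = H (fst q, G q)" for q
  have "continuous_on ({0..1} \<times> UNIV) K"
    unfolding K_def
    by (rule continuous_on_compose2[OF H(1)]) (auto intro!: continuous_intros G(1))
  moreover have "\<exists>g. homeomorphism UNIV UNIV (\<lambda>x. K (t, x)) g" if "t \<in> {0..1}" for t
  proof -
    have "\<exists>g. homeomorphism UNIV UNIV (\<lambda>x. G (t, x)) g" using G(2) that by simp
    then obtain g1 where "homeomorphism UNIV UNIV (\<lambda>x. G (t, x)) g1" by (elim exE)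
    have "\<exists>g. homeomorphism UNIV UNIV (\<lambda>x. H (t, x)) g" using H(2) that by simp
    then obtain g2 where "homeomorphism UNIV UNIV (\<lambda>x. H (t, x)) g2" by (elim exE)
    note g2 = this
    have "homeomorphism UNIV UNIV ((\<lambda>x. H (t, x)) \<circ> (\<lambda>x. G (t, x))) (g1 \<circ> g2)"
      by (rule homeomorphism_compose[OF \<open>homeomorphism UNIV UNIV (\<lambda>x. G (t, x)) g1\<close> g2])
    then show ?thesis unfolding K_def o_def by auto
  qed
  moreover have "\<forall>x. K (0, x) = x" using G(3) H(3) by (simp add: K_def)
  moreover have "(\<lambda>x. K (1, x)) ` A = L"
  proof -
    have "(\<lambda>x. K (1, x)) ` A = (\<lambda>x. H (1, x)) ` ((\<lambda>x. G (1, x)) ` A)"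
      unfolding K_def image_image by simp
    then show ?thesis using G(4) H(4) by simp
  qed
  ultimately show ?thesis unfolding isotopic_def by blast
qed


lemma revcond_mono: assumes "revcond m s t I \<epsilon>" "0 < \<epsilon>'" "\<epsilon>' \<le> \<epsilon>" shows "revcond m s t I \<epsilon>'"
proof -
  have "{t-\<epsilon>'<..<t} \<subseteq> {t-\<epsilon><..<t}" "{t<..<t+\<epsilon>'} \<subseteq> {t<..<t+\<epsilon>}" using assms by auto
  then show ?thesis using assms(1) unfolding revcond_def by blast
qed

lemma revcond_transfer:
  assumes rc: "revcond m s t I \<epsilon>" and sub: "I \<subseteq> {..<m}"
    and cmp: "\<And>\<tau> i k. \<bar>\<tau> - t\<bar> < \<epsilon> \<Longrightarrow> i \<in> I \<Longrightarrow> k < m \<Longrightarrow>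
      (fst (s' k \<tau>) < fst (s' i \<tau>) \<longleftrightarrow> fst (s k \<tau>) < fst (s i \<tau>)) \<and>
      (fst (s' i \<tau>) < fst (s' k \<tau>) \<longleftrightarrow> fst (s i \<tau>) < fst (s k \<tau>))"
  shows "revcond m s' t I \<epsilon>"
  unfolding revcond_def
proof (intro ballI)
  fix t1 t2 assume t1: "t1 \<in> {t-\<epsilon><..<t}" and t2: "t2 \<in> {t<..<t+\<epsilon>}"
  have a1: "\<bar>t1 - t\<bar> < \<epsilon>" and a2: "\<bar>t2 - t\<bar> < \<epsilon>" using t1 t2 by auto
  have R: "(\<forall>i\<in>I. \<forall>j\<in>I. fst (s i t1) < fst (s j t1) \<longleftrightarrow> fst (s j t2) < fst (s i t2)) \<and>
            (\<forall>k<m. k \<notin> I \<longrightarrow>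
               ((\<forall>i\<in>I. fst (s k t1) < fst (s i t1)) \<or> (\<forall>i\<in>I. fst (s i t1) < fst (s k t1))) \<and>
               ((\<forall>i\<in>I. fst (s k t2) < fst (s i t2)) \<or> (\<forall>i\<in>I. fst (s i t2) < fst (s k t2))))"
    using rc t1 t2 unfolding revcond_def by blast
  show "(\<forall>i\<in>I. \<forall>j\<in>I. fst (s' i t1) < fst (s' j t1) \<longleftrightarrow> fst (s' j t2) < fst (s' i t2)) \<and>
            (\<forall>k<m. k \<notin> I \<longrightarrow>
               ((\<forall>i\<in>I. fst (s' k t1) < fst (s' i t1)) \<or> (\<forall>i\<in>I. fst (s' i t1) < fst (s' k t1))) \<and>
               ((\<forall>i\<in>I. fst (s' k t2) < fst (s' i t2)) \<or> (\<forall>i\<in>I. fst (s' i t2) < fst (s' k t2))))"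
  proof (intro conjI ballI allI impI)
    fix i j assume ij: "i \<in> I" "j \<in> I"
    have "j < m" using ij sub by auto
    then show "fst (s' i t1) < fst (s' j t1) \<longleftrightarrow> fst (s' j t2) < fst (s' i t2)"
      using cmp[OF a1 ij(1), of j] cmp[OF a2 ij(1), of j] R ij by simp
  next
    fix k assume k: "k < m" "k \<notin> I"
    show "(\<forall>i\<in>I. fst (s' k t1) < fst (s' i t1)) \<or> (\<forall>i\<in>I. fst (s' i t1) < fst (s' k t1))"
      using cmp[OF a1 _ k(1)] R k by simp
    show "(\<forall>i\<in>I. fst (s' k t2) < fst (s' i t2)) \<or> (\<forall>i\<in>I. fst (s' i t2) < fst (s' k t2))"
      using cmp[OF a2 _ k(1)] R k by simp
  qed
qed




lemma clip1: "(1::real) \<le> y \<Longrightarrow> max 0 (min 1 y) = 1" by simp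
lemma clip0: "y \<le> (0::real) \<Longrightarrow> max 0 (min 1 y) = 0" by simp
lemma clip_lip: "\<bar>max 0 (min 1 p) - max 0 (min 1 q)\<bar> \<le> \<bar>p - (q::real)\<bar>"
  by (smt (verit))
lemma frac_le: "0 < (e::real) \<Longrightarrow> A \<le> e * c \<Longrightarrow> A / e \<le> c" by (simp add: divide_le_eq mult.commute)
lemma frac_ge: "0 < (e::real) \<Longrightarrow> e * c \<le> A \<Longrightarrow> c \<le> A / e" by (simp add: le_divide_eq mult.commute)

lemma convex_strict: assumes "a < b" "c < (d::real)" "0 \<le> l" "l \<le> 1"
  shows "a + l * (c - a) < b + l * (d - b)"
proof -
  have "a + l * (c - a) = (1 - l) * a + l * c" by (simp add: algebra_simps)
  moreover have "b + l * (d - b) = (1 - l) * b + l * d" by (simp add: algebra_simps)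
  moreover have "(1 - l) * a + l * c < (1 - l) * b + l * d"
  proof (cases "l = 1")
    case True then show ?thesis using assms by simp
  next
    case False
    then have "(1 - l) * a < (1 - l) * b" using assms by (intro mult_strict_left_mono) auto
    moreover have "l * c \<le> l * d" using assms by (intro mult_left_mono) auto
    ultimately show ?thesis by linarith
  qed
  ultimately show ?thesis by simp
qed

lemma two_elems: assumes "2 \<le> card A" obtains a b where "a \<in> A" "b \<in> A" "a \<noteq> b"
proof -
  have fin: "finite A" using assms card.infinite by force
  have "A \<noteq> {}" using assms by auto
  then obtain a where a: "a \<in> A" by blast
  have "card (A - {a}) \<ge> 1" using assms a fin by simp
  then have "A - {a} \<noteq> {}" by (metis card.empty not_one_le_zero)
  then obtain b where "b \<in> A - {a}" by blast
  then show ?thesis using that a by auto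
qed

lemma nat_dist: "(a::nat) \<noteq> b \<Longrightarrow> 1 \<le> \<bar>real a - real b\<bar>" by linarith

locale stepctx =
  fixes m :: nat and s :: "nat \<Rightarrow> real \<Rightarrow> real \<times> real" and t0 x0 :: real and I :: "nat set"
    and \<epsilon>0 r g \<delta> :: real
  assumes good: "good m s"
  and t0CT: "t0 \<in> crossing_times m s"
  and I_def: "I = strands_at m s t0 x0"
  and cardI: "card I \<ge> 2"
  and eps0: "\<epsilon>0 > 0" and rev0: "revcond m s t0 I \<epsilon>0"
  and r0: "0 < r" and rx0: "r < x0 / 2" and rJ: "\<forall>j<m. j \<notin> I \<longrightarrow> 2 * r < \<bar>fst (s j t0) - x0\<bar>"
  and g0: "0 < g" and gI: "\<forall>k\<in>I. \<forall>l\<in>I. k \<noteq> l \<longrightarrow> g \<le> \<bar>snd (s k t0) - snd (s l t0)\<bar>"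
  and d0: "0 < \<delta>" and dlo: "0 < t0 - \<delta>" and dhi: "t0 + \<delta> < 1" and deps: "\<delta> < \<epsilon>0"
  and win: "\<forall>t. \<bar>t - t0\<bar> \<le> \<delta> \<longrightarrow> (\<forall>k\<in>I. \<bar>fst (s k t) - x0\<bar> \<le> r/8 \<and> \<bar>snd (s k t) - snd (s k t0)\<bar> \<le> g/4)
      \<and> (\<forall>j<m. j \<notin> I \<longrightarrow> r < \<bar>fst (s j t) - x0\<bar>) \<and> (t \<noteq> t0 \<longrightarrow> t \<notin> crossing_times m s)"
begin

abbreviation X where "X i t \<equiv> fst (s i t)"
abbreviation Z where "Z i t \<equiv> snd (s i t)"

lemma gb: "geom_braid m s" using good by (simp add: good_def)

lemma I_sub: "I \<subseteq> {..<m}" using I_def by (auto simp: strands_at_def)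
lemma finI: "finite I" using I_sub finite_subset by blast
lemma XI: "k \<in> I \<Longrightarrow> X k t0 = x0" using I_def by (simp add: strands_at_def)
lemma t0_01: "0 < t0" "t0 < 1" using t0CT good by (auto simp: good_def)

lemma win_01: "\<bar>t - t0\<bar> \<le> \<delta> \<Longrightarrow> 0 < t \<and> t < 1" using dlo dhi by (auto simp: abs_le_iff)

lemma noCT: assumes "\<bar>t - t0\<bar> \<le> \<delta>" "t \<noteq> t0" "i < m" "j < m" "i \<noteq> j" shows "X i t \<noteq> X j t"
proof
  assume "X i t = X j t"
  then have "t \<in> crossing_times m s" using assms win_01[OF assms(1)] unfolding crossing_times_def by auto
  then show False using win assms by blast
qed

definition N :: nat where "N = card I"
definition tb :: real where "tb = t0 - \<delta>"
definition u :: "nat \<Rightarrow> nat" where "u k = card {l\<in>I. X l tb < X k tb}"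

lemma N2: "N \<ge> 2" using cardI by (simp add: N_def)

lemma rev_at: assumes "t0 - \<epsilon>0 < t1" "t1 < t0" "t0 < t2" "t2 < t0 + \<epsilon>0" "i \<in> I" "j \<in> I"
  shows "X i t1 < X j t1 \<longleftrightarrow> X j t2 < X i t2"
  using rev0 assms unfolding revcond_def by auto

lemma order_before: assumes "k \<in> I" "l \<in> I" "t0 - \<delta> \<le> t" "t < t0"
  shows "X k t < X l t \<longleftrightarrow> X k tb < X l tb"
proof -
  let ?t2 = "t0 + \<delta>/2"
  have "X k t < X l t \<longleftrightarrow> X l ?t2 < X k ?t2"
    using rev_at[of t ?t2 k l] assms deps d0 by auto
  also have "\<dots> \<longleftrightarrow> X k tb < X l tb"
    using rev_at[of tb ?t2 k l] assms deps d0 unfolding tb_def by auto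
  finally show ?thesis .
qed

lemma order_after: assumes "k \<in> I" "l \<in> I" "t0 < t" "t \<le> t0 + \<delta>"
  shows "X k t < X l t \<longleftrightarrow> X l tb < X k tb"
  using rev_at[of tb t l k] assms deps d0 unfolding tb_def by auto

lemma distinct_tb: assumes "k \<in> I" "l \<in> I" "k \<noteq> l" shows "X k tb \<noteq> X l tb"
  using noCT[of tb k l] assms I_sub d0 by (auto simp: tb_def)

lemma u_mono: assumes "k \<in> I" "l \<in> I" "X k tb < X l tb" shows "u k < u l"
proof -
  have "{l'\<in>I. X l' tb < X k tb} \<subset> {l'\<in>I. X l' tb < X l tb}" using assms by auto
  then show ?thesis unfolding u_def by (intro psubset_card_mono) (auto intro: finite_subset[OF _ finI])
qed

lemma u_less_iff: assumes "k \<in> I" "l \<in> I" shows "u k < u l \<longleftrightarrow> X k tb < X l tb"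
  using u_mono[OF assms] u_mono[OF assms(2,1)] distinct_tb[OF assms] by (cases "k = l") force+

lemma u_inj: assumes "k \<in> I" "l \<in> I" "u k = u l" shows "k = l"
  using u_mono[OF assms(1,2)] u_mono[OF assms(2,1)] distinct_tb[OF assms(1,2)] assms(3)
  by (metis less_irrefl linorder_neqE_linordered_idom)

lemma u_bound: assumes "k \<in> I" shows "u k < N"
proof -
  have "{l\<in>I. X l tb < X k tb} \<subseteq> I - {k}" by auto
  then have "u k \<le> card (I - {k})" unfolding u_def by (intro card_mono) (auto simp: finI)
  also have "\<dots> < N" using assms finI N2 by (simp add: N_def)
  finally show ?thesis .
qed

lemma u_sum: assumes "k \<in> I" "l \<in> I" "k \<noteq> l" shows "1 \<le> u k + u l" "u k + u l + 3 \<le> 2 * N"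
proof -
  have "u k \<noteq> u l" using u_inj assms by blast
  then show "1 \<le> u k + u l" "u k + u l + 3 \<le> 2 * N" using u_bound[OF assms(1)] u_bound[OF assms(2)] by linarith+
qed


definition h :: real where "h = \<delta> / (4 * real N)"
definition a :: real where "a = r / (16 * real N * \<delta>)"
definition L :: "nat \<Rightarrow> real \<Rightarrow> real" where
  "L k t = x0 + a * real (u k) * (real (u k) * h - (t - t0))"

lemma h0: "h > 0" using d0 N2 by (simp add: h_def)
lemma a0: "a > 0" using d0 N2 r0 by (simp add: a_def)

lemma L_diff: "L k t - L l t = a * (real (u k) - real (u l)) * ((real (u k) + real (u l)) * h - (t - t0))"
  unfolding L_def by (simp add: algebra_simps)

lemma L_less_iff: "L k t < L l t \<longleftrightarrow> (real (u k) - real (u l)) * ((real (u k) + real (u l)) * h - (t - t0)) < 0"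
proof -
  have "L k t < L l t \<longleftrightarrow> L k t - L l t < 0" by simp
  also have "\<dots> \<longleftrightarrow> a * ((real (u k) - real (u l)) * ((real (u k) + real (u l)) * h - (t - t0))) < 0"
    unfolding L_diff by (simp add: mult.assoc)
  also have "\<dots> \<longleftrightarrow> (real (u k) - real (u l)) * ((real (u k) + real (u l)) * h - (t - t0)) < 0"
    using a0 by (simp add: mult_less_0_iff)
  finally show ?thesis .
qed

lemma L_bound: assumes "k \<in> I" "\<bar>t - t0\<bar> \<le> \<delta>" shows "\<bar>L k t - x0\<bar> \<le> r/8"
proof -
  have uN: "real (u k) \<le> real N" using u_bound[OF assms(1)] by simp
  have Nh: "real N * h = \<delta>/4" using N2 by (simp add: h_def)
  have "0 \<le> real (u k) * h" using h0 by simp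
  then have "\<bar>real (u k) * h - (t - t0)\<bar> \<le> real (u k) * h + \<delta>" using assms(2)[unfolded abs_le_iff] unfolding abs_le_iff by linarith
  also have "\<dots> \<le> real N * h + \<delta>" using uN h0 by (simp add: mult_right_mono)
  finally have b1: "\<bar>real (u k) * h - (t - t0)\<bar> \<le> 5/4 * \<delta>" using Nh by simp
  have "\<bar>L k t - x0\<bar> = a * (real (u k) * \<bar>real (u k) * h - (t - t0)\<bar>)"
    unfolding L_def using a0 by (simp add: abs_mult)
  also have "\<dots> \<le> a * (real N * (5/4 * \<delta>))"
    using a0 uN b1 by (intro mult_left_mono mult_mono) auto
  also have "\<dots> = r * 5 / 64" using N2 d0 by (simp add: a_def field_simps)
  also have "\<dots> \<le> r/8" using r0 by simp
  finally show ?thesis .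
qed

definition lam :: "real \<Rightarrow> real" where "lam t = max 0 (min 1 (2 - 2 * \<bar>t - t0\<bar> / \<delta>))"
definition chi :: "real \<Rightarrow> real" where "chi x = max 0 (min 1 (2 - 2 * \<bar>x - x0\<bar> / r))"
definition bet :: "nat \<Rightarrow> real \<Rightarrow> real" where "bet k z = max 0 (min 1 (2 - 4 * \<bar>z - Z k t0\<bar> / g))"
definition clamp :: "real \<Rightarrow> real" where "clamp t = max 0 (min 1 t)"
definition D :: "nat \<Rightarrow> real \<Rightarrow> real" where "D k t = lam t * (L k t - X k (clamp t))"
definition psi :: "real \<Rightarrow> real \<Rightarrow> real \<Rightarrow> real" where
  "psi t x z = chi x * (\<Sum>k\<in>I. bet k z * D k t)"

lemma lam_01: "0 \<le> lam t" "lam t \<le> 1" by (auto simp: lam_def)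
lemma lam_1: assumes "\<bar>t - t0\<bar> \<le> \<delta>/2" shows "lam t = 1"
proof -
  have "2 * \<bar>t - t0\<bar> / \<delta> \<le> 1" using assms d0 by (intro frac_le) auto
  then show ?thesis unfolding lam_def by (intro clip1) linarith
qed
lemma lam_0: assumes "\<delta> \<le> \<bar>t - t0\<bar>" shows "lam t = 0"
proof -
  have "2 \<le> 2 * \<bar>t - t0\<bar> / \<delta>" using assms d0 by (intro frac_ge) auto
  then show ?thesis unfolding lam_def by (intro clip0) linarith
qed
lemma chi_1: assumes "\<bar>x - x0\<bar> \<le> r/2" shows "chi x = 1"
proof -
  have "2 * \<bar>x - x0\<bar> / r \<le> 1" using assms r0 by (intro frac_le) auto
  then show ?thesis unfolding chi_def by (intro clip1) linarith
qed
lemma chi_0: assumes "r \<le> \<bar>x - x0\<bar>" shows "chi x = 0"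
proof -
  have "2 \<le> 2 * \<bar>x - x0\<bar> / r" using assms r0 by (intro frac_ge) auto
  then show ?thesis unfolding chi_def by (intro clip0) linarith
qed
lemma bet_01: "0 \<le> bet k z" "bet k z \<le> 1" by (auto simp: bet_def)
lemma bet_1: assumes "\<bar>z - Z k t0\<bar> \<le> g/4" shows "bet k z = 1"
proof -
  have "4 * \<bar>z - Z k t0\<bar> / g \<le> 1" using assms g0 by (intro frac_le) auto
  then show ?thesis unfolding bet_def by (intro clip1) linarith
qed
lemma bet_0: assumes "g/2 \<le> \<bar>z - Z k t0\<bar>" shows "bet k z = 0"
proof -
  have "2 \<le> 4 * \<bar>z - Z k t0\<bar> / g" using assms g0 by (intro frac_ge) auto
  then show ?thesis unfolding bet_def by (intro clip0) linarith
qed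
lemma clamp_id: "t \<in> {0..1} \<Longrightarrow> clamp t = t" by (auto simp: clamp_def)
lemma clamp_01: "clamp t \<in> {0..1}" by (auto simp: clamp_def)

lemma chi_lip: "\<bar>chi x - chi y\<bar> \<le> 2 * \<bar>x - y\<bar> / r"
proof -
  have e: "(2 - 2 * \<bar>x - x0\<bar> / r) - (2 - 2 * \<bar>y - x0\<bar> / r) = (2 / r) * (\<bar>y - x0\<bar> - \<bar>x - x0\<bar>)"
    using r0 by (simp add: field_simps)
  have "\<bar>\<bar>y - x0\<bar> - \<bar>x - x0\<bar>\<bar> \<le> \<bar>(y - x0) - (x - x0)\<bar>" by (rule abs_triangle_ineq3)
  also have "\<dots> = \<bar>x - y\<bar>" by simp
  finally have "(2 / r) * \<bar>\<bar>y - x0\<bar> - \<bar>x - x0\<bar>\<bar> \<le> (2 / r) * \<bar>x - y\<bar>" using r0 by (intro mult_left_mono) auto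
  then have "\<bar>(2 - 2 * \<bar>x - x0\<bar> / r) - (2 - 2 * \<bar>y - x0\<bar> / r)\<bar> \<le> 2 * \<bar>x - y\<bar> / r"
    unfolding e abs_mult using r0 by simp
  then show ?thesis unfolding chi_def using clip_lip order_trans by blast
qed

lemma D_bound: assumes "k \<in> I" shows "\<bar>D k t\<bar> \<le> r/4"
proof (cases "\<bar>t - t0\<bar> \<le> \<delta>")
  case True
  have c: "clamp t = t" using win_01[OF True] by (intro clamp_id) auto
  have w: "\<bar>X k t - x0\<bar> \<le> r/8" using win True assms by blast
  have "\<bar>L k t - X k t\<bar> \<le> r/4" using L_bound[OF assms True, unfolded abs_le_iff] w[unfolded abs_le_iff]
    unfolding abs_le_iff by linarith
  then have "\<bar>lam t\<bar> * \<bar>L k t - X k t\<bar> \<le> 1 * (r/4)" using lam_01[of t]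
    by (intro mult_mono) auto
  then show ?thesis unfolding D_def c by (simp add: abs_mult)
next
  case False then show ?thesis using r0 by (simp add: D_def lam_0)
qed

lemma bet_unique: assumes "k \<in> I" "l \<in> I" "bet k z \<noteq> 0" "bet l z \<noteq> 0" shows "k = l"
proof (rule ccontr)
  assume "k \<noteq> l"
  then have "g \<le> \<bar>Z k t0 - Z l t0\<bar>" using gI assms by blast
  moreover have "\<bar>z - Z k t0\<bar> < g/2" using assms(3) by (metis bet_0 not_le)
  moreover have "\<bar>z - Z l t0\<bar> < g/2" using assms(4) by (metis bet_0 not_le)
  ultimately show False by linarith
qed

lemma sum_bound: "\<bar>\<Sum>k\<in>I. bet k z * D k t\<bar> \<le> r/4"
proof (cases "\<exists>k\<in>I. bet k z \<noteq> 0")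
  case True
  then obtain k where k: "k \<in> I" "bet k z \<noteq> 0" by blast
  have "(\<Sum>l\<in>I - {k}. bet l z * D l t) = 0"
  proof (rule sum.neutral, rule ballI)
    fix l assume "l \<in> I - {k}"
    then have "bet l z = 0" using bet_unique[OF k(1), of l] k(2) by auto
    then show "bet l z * D l t = 0" by simp
  qed
  then have "(\<Sum>l\<in>I. bet l z * D l t) = bet k z * D k t" using sum.remove[OF finI k(1), of "\<lambda>l. bet l z * D l t"] by simp
  moreover have "\<bar>bet k z\<bar> * \<bar>D k t\<bar> \<le> 1 * (r/4)" using bet_01[of k z] D_bound[OF k(1)]
    by (intro mult_mono) auto
  ultimately show ?thesis by (simp add: abs_mult)
next
  case False
  then have "(\<Sum>k\<in>I. bet k z * D k t) = 0" by (intro sum.neutral) auto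
  then show ?thesis using r0 by simp
qed

lemma sum_single: assumes "k \<in> I" "\<bar>z - Z k t0\<bar> \<le> g/4"
  shows "(\<Sum>l\<in>I. bet l z * D l t) = D k t"
proof -
  have bz: "bet l z = 0" if "l \<in> I" "l \<noteq> k" for l
  proof -
    have "g \<le> \<bar>Z k t0 - Z l t0\<bar>" using gI assms(1) that by metis
    moreover have "\<bar>Z k t0 - Z l t0\<bar> \<le> \<bar>z - Z k t0\<bar> + \<bar>z - Z l t0\<bar>"
    proof -
      have e: "(z - Z l t0) - (z - Z k t0) = Z k t0 - Z l t0" by simp
      have "\<bar>(z - Z l t0) - (z - Z k t0)\<bar> \<le> \<bar>z - Z l t0\<bar> + \<bar>z - Z k t0\<bar>" by (rule abs_triangle_ineq4)
      then show ?thesis by (simp only: e)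
    qed
    ultimately show ?thesis using assms(2) by (intro bet_0) linarith
  qed
  have "(\<Sum>l\<in>I - {k}. bet l z * D l t) = 0"
  proof (rule sum.neutral, rule ballI)
    fix l assume "l \<in> I - {k}"
    then show "bet l z * D l t = 0" using bz[of l] by simp
  qed
  then have "(\<Sum>l\<in>I. bet l z * D l t) = bet k z * D k t" using sum.remove[OF finI assms(1), of "\<lambda>l. bet l z * D l t"] by simp
  then show ?thesis using bet_1[OF assms(2)] by simp
qed

lemma psi_out: "\<delta> \<le> \<bar>t - t0\<bar> \<Longrightarrow> psi t x z = 0"
  by (simp add: psi_def D_def lam_0)

lemma cont_comp: "continuous_on UNIV F \<Longrightarrow> continuous_on S f \<Longrightarrow> continuous_on S (\<lambda>x. F (f x))"
  by (rule continuous_on_compose2) auto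

lemma chi_cont: "continuous_on UNIV chi" unfolding chi_def by (intro continuous_intros) (use r0 in auto)
lemma bet_cont: "continuous_on UNIV (bet k)" unfolding bet_def by (intro continuous_intros) (use g0 in auto)
lemma lam_cont: "continuous_on UNIV lam" unfolding lam_def by (intro continuous_intros) (use d0 in auto)
lemma L_cont: "continuous_on UNIV (L k)" unfolding L_def by (intro continuous_intros)

lemma Xc_cont: assumes "k \<in> I" shows "continuous_on UNIV (\<lambda>t. X k (clamp t))"
proof -
  have "continuous_on {0..1} (s k)" using gb assms I_sub unfolding geom_braid_def by auto
  then have A: "continuous_on {0..1} (\<lambda>t. X k t)" by (intro continuous_intros)
  have B: "continuous_on UNIV clamp" unfolding clamp_def by (intro continuous_intros)
  have "clamp ` UNIV \<subseteq> {0..1}" using clamp_01 by auto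
  from continuous_on_compose2[OF A B this] show ?thesis .
qed

lemma psi_cont: "continuous_on UNIV (\<lambda>q. psi (fst q) (fst (snd q)) (snd (snd q)))"
proof -
  have T: "continuous_on UNIV (\<lambda>q::pt3. fst q)" "continuous_on UNIV (\<lambda>q::pt3. fst (snd q))"
    "continuous_on UNIV (\<lambda>q::pt3. snd (snd q))" by (intro continuous_intros)+
  have S: "continuous_on UNIV (\<lambda>q::pt3. bet k (snd (snd q)) * D k (fst q))" if "k \<in> I" for k
    unfolding D_def
    by (intro continuous_on_mult continuous_on_diff cont_comp[OF bet_cont] cont_comp[OF lam_cont]
        cont_comp[OF L_cont] cont_comp[OF Xc_cont[OF that]] T)
  show ?thesis unfolding psi_def
    by (intro continuous_on_mult continuous_on_sum cont_comp[OF chi_cont] T S)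
qed

lemma psi_lip: "\<bar>psi t x z - psi t y z\<bar> \<le> \<bar>x - y\<bar> / 2"
proof -
  have "\<bar>psi t x z - psi t y z\<bar> = \<bar>chi x - chi y\<bar> * \<bar>\<Sum>k\<in>I. bet k z * D k t\<bar>"
    unfolding psi_def by (simp add: abs_mult flip: left_diff_distrib)
  also have "\<dots> \<le> (2 * \<bar>x - y\<bar> / r) * (r/4)" using chi_lip sum_bound r0 by (intro mult_mono) auto
  also have "\<dots> = \<bar>x - y\<bar> / 2" using r0 by simp
  finally show ?thesis .
qed

lemma shift_psi: "shiftfun psi (x0 - r) (t0 - \<delta>) (t0 + \<delta>)"
proof
  show "continuous_on UNIV (\<lambda>q. psi (fst q) (fst (snd q)) (snd (snd q)))" by (rule psi_cont)
  show "0 < x0 - r" using rx0 r0 by simp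
  show "psi t x z = 0" if "x \<le> x0 - r" for t x z using that by (simp add: psi_def chi_0)
  show "0 < t0 - \<delta>" "t0 - \<delta> \<le> t0 + \<delta>" "t0 + \<delta> < 1" using dlo dhi d0 by auto
  show "psi t x z = 0" if "t < t0 - \<delta> \<or> t0 + \<delta> < t" for t x z using that by (intro psi_out) (use d0 in \<open>auto simp: abs_if\<close>)
  show "\<bar>psi t x z - psi t y z\<bar> \<le> \<bar>x - y\<bar> / 2" for t x y z by (rule psi_lip)
qed

lemma shift_mpsi: "shiftfun (\<lambda>t x z. - psi t x z) (x0 - r) (t0 - \<delta>) (t0 + \<delta>)"
proof
  show "continuous_on UNIV (\<lambda>q. - psi (fst q) (fst (snd q)) (snd (snd q)))" by (intro continuous_intros psi_cont)
  show "0 < x0 - r" using rx0 r0 by simp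
  show "- psi t x z = 0" if "x \<le> x0 - r" for t x z using that by (simp add: psi_def chi_0)
  show "0 < t0 - \<delta>" "t0 - \<delta> \<le> t0 + \<delta>" "t0 + \<delta> < 1" using dlo dhi d0 by auto
  show "- psi t x z = 0" if "t < t0 - \<delta> \<or> t0 + \<delta> < t" for t x z using that by (simp, intro psi_out) (use d0 in \<open>auto simp: abs_if\<close>)
  show "\<bar>- psi t x z - - psi t y z\<bar> \<le> \<bar>x - y\<bar> / 2" for t x y z using psi_lip[of t x z y] by (simp add: abs_minus_commute)
qed


definition sn :: "nat \<Rightarrow> real \<Rightarrow> real \<times> real" where
  "sn i t = (X i t + psi t (X i t) (Z i t), Z i t)"

abbreviation Xn where "Xn i t \<equiv> fst (sn i t)"

lemma Zn[simp]: "snd (sn i t) = Z i t" by (simp add: sn_def)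

lemma sn_out: "\<delta> \<le> \<bar>t - t0\<bar> \<Longrightarrow> sn i t = s i t"
  by (simp add: sn_def psi_out)

lemma Xn_I: assumes "k \<in> I" "\<bar>t - t0\<bar> \<le> \<delta>"
  shows "Xn k t = X k t + lam t * (L k t - X k t)" "psi t (X k t) (Z k t) = lam t * (L k t - X k t)"
proof -
  have w: "\<bar>X k t - x0\<bar> \<le> r/8" "\<bar>Z k t - Z k t0\<bar> \<le> g/4" using win assms by blast+
  have c: "clamp t = t" using win_01[OF assms(2)] by (intro clamp_id) auto
  have "chi (X k t) = 1" using w r0 by (intro chi_1) auto
  then show "psi t (X k t) (Z k t) = lam t * (L k t - X k t)"
    unfolding psi_def sum_single[OF assms(1) w(2)] by (simp add: D_def c)
  then show "Xn k t = X k t + lam t * (L k t - X k t)" by (simp add: sn_def)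
qed

lemma Xn_J: assumes "j < m" "j \<notin> I" shows "Xn j t = X j t" "psi t (X j t) (Z j t) = 0"
proof -
  show "psi t (X j t) (Z j t) = 0"
  proof (cases "\<bar>t - t0\<bar> \<le> \<delta>")
    case True
    then have "r < \<bar>X j t - x0\<bar>" using win assms by blast
    then show ?thesis by (simp add: psi_def chi_0)
  next
    case False then show ?thesis by (simp add: psi_out)
  qed
  then show "Xn j t = X j t" by (simp add: sn_def)
qed

lemma Xn_I_near: assumes "k \<in> I" "\<bar>t - t0\<bar> \<le> \<delta>" shows "\<bar>Xn k t - x0\<bar> \<le> r/8"
proof -
  have w: "\<bar>X k t - x0\<bar> \<le> r/8" using win assms by blast
  have l: "\<bar>L k t - x0\<bar> \<le> r/8" by (rule L_bound[OF assms])
  have "Xn k t - x0 = (1 - lam t) * (X k t - x0) + lam t * (L k t - x0)"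
    unfolding Xn_I(1)[OF assms] by (simp add: algebra_simps)
  also have "\<bar>\<dots>\<bar> \<le> (1 - lam t) * (r/8) + lam t * (r/8)"
  proof -
    have "\<bar>(1 - lam t) * (X k t - x0)\<bar> = (1 - lam t) * \<bar>X k t - x0\<bar>"
      using lam_01[of t] by (simp add: abs_mult)
    also have "\<dots> \<le> (1 - lam t) * (r/8)" using w lam_01[of t] by (intro mult_left_mono) auto
    finally have "\<bar>(1 - lam t) * (X k t - x0)\<bar> \<le> (1 - lam t) * (r/8)" .
    moreover have "\<bar>lam t * (L k t - x0)\<bar> = lam t * \<bar>L k t - x0\<bar>"
      using lam_01[of t] by (simp add: abs_mult)
    moreover have "lam t * \<bar>L k t - x0\<bar> \<le> lam t * (r/8)" using l lam_01[of t] by (intro mult_left_mono) auto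
    ultimately show ?thesis by (smt (verit) abs_triangle_ineq)
  qed
  also have "\<dots> = r/8" by (simp add: field_simps)
  finally show ?thesis .
qed

lemma sn_back: assumes "i < m" shows "(Xn i t + - psi t (Xn i t) (Z i t), Z i t) = s i t"
proof (cases "\<bar>t - t0\<bar> \<le> \<delta>")
  case True
  show ?thesis
  proof (cases "i \<in> I")
    case iI: True
    have w: "\<bar>Z i t - Z i t0\<bar> \<le> g/4" using win True iI by blast
    have c: "clamp t = t" using win_01[OF True] by (intro clamp_id) auto
    have "chi (Xn i t) = 1" using Xn_I_near[OF iI True] r0 by (intro chi_1) auto
    then have "psi t (Xn i t) (Z i t) = lam t * (L i t - X i t)"
      unfolding psi_def sum_single[OF iI w] by (simp add: D_def c)
    then show ?thesis using Xn_I(1)[OF iI True] by (simp add: prod_eq_iff)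
  next
    case False
    then show ?thesis using Xn_J[OF assms False] by (simp add: prod_eq_iff)
  qed
next
  case False
  then show ?thesis using sn_out[of t i] psi_out[of t] by (simp add: prod_eq_iff)
qed

lemma cmp_nb: assumes "i < m" "j < m" "\<not> (i \<in> I \<and> j \<in> I)"
  shows "(Xn i t < Xn j t \<longleftrightarrow> X i t < X j t) \<and> (Xn i t = Xn j t \<longleftrightarrow> X i t = X j t)"
proof (cases "\<bar>t - t0\<bar> \<le> \<delta>")
  case False then show ?thesis using sn_out[of t] by simp
next
  case True
  consider "i \<notin> I" "j \<notin> I" | "i \<in> I" "j \<notin> I" | "i \<notin> I" "j \<in> I" using assms(3) by blast
  then show ?thesis
  proof cases
    case 1 then show ?thesis using Xn_J assms by simp
  next
    case 2
    have a: "\<bar>Xn i t - x0\<bar> \<le> r/8" "\<bar>X i t - x0\<bar> \<le> r/8" using Xn_I_near[OF 2(1) True] win True 2 by blast+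
    have b: "r < \<bar>X j t - x0\<bar>" "Xn j t = X j t" using win True 2 assms Xn_J by blast+
    show ?thesis using a b r0 by (auto simp: abs_if split: if_splits)
  next
    case 3
    have a: "\<bar>Xn j t - x0\<bar> \<le> r/8" "\<bar>X j t - x0\<bar> \<le> r/8" using Xn_I_near[OF 3(2) True] win True 3 by blast+
    have b: "r < \<bar>X i t - x0\<bar>" "Xn i t = X i t" using win True 3 assms Xn_J by blast+
    show ?thesis using a b r0 by (auto simp: abs_if split: if_splits)
  qed
qed


lemma Nh: "real N * h = \<delta> / 4" using N2 by (simp add: h_def)

lemma usum_h: assumes "k \<in> I" "l \<in> I" "k \<noteq> l"
  shows "h \<le> (real (u k) + real (u l)) * h" "(real (u k) + real (u l)) * h < \<delta> / 2"
    "(real (u k) + real (u l)) * h + h \<le> \<delta> / 2"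
proof -
  have s1: "1 \<le> real (u k) + real (u l)" using u_sum(1)[OF assms] by linarith
  then show "h \<le> (real (u k) + real (u l)) * h" using h0 by simp
  have s2: "real (u k) + real (u l) + 3 \<le> 2 * real N" using u_sum(2)[OF assms] by linarith
  have "(real (u k) + real (u l)) * h \<le> (2 * real N - 3) * h" using s2 h0 by (intro mult_right_mono) auto
  also have "\<dots> < 2 * real N * h" using h0 by simp
  also have "\<dots> = \<delta>/2" using Nh by simp
  finally show "(real (u k) + real (u l)) * h < \<delta> / 2" .
  have "(real (u k) + real (u l)) * h + h = (real (u k) + real (u l) + 1) * h" by (simp add: algebra_simps)
  also have "\<dots> \<le> (2 * real N) * h" using s2 h0 by (intro mult_right_mono) auto
  also have "\<dots> = \<delta>/2" using Nh by simp
  finally show "(real (u k) + real (u l)) * h + h \<le> \<delta> / 2" .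
qed

lemma Xn_before: assumes "k \<in> I" "l \<in> I" "t0 - \<delta> \<le> t" "t < t0" "u k < u l"
  shows "Xn k t < Xn l t"
proof -
  have w: "\<bar>t - t0\<bar> \<le> \<delta>" using assms(3,4) by simp
  have "X k t < X l t" using order_before[OF assms(1-4)] u_less_iff[OF assms(1,2)] assms(5) by simp
  moreover have "L k t < L l t" unfolding L_less_iff
  proof (rule mult_neg_pos)
    show "real (u k) - real (u l) < 0" using assms(5) by simp
    have "0 \<le> (real (u k) + real (u l)) * h" using h0 by simp
    then show "0 < (real (u k) + real (u l)) * h - (t - t0)" using assms(4) by linarith
  qed
  ultimately show ?thesis unfolding Xn_I(1)[OF assms(1) w] Xn_I(1)[OF assms(2) w]
    using lam_01 by (intro convex_strict)
qed

lemma Xn_after: assumes "k \<in> I" "l \<in> I" "t0 + \<delta>/2 \<le> t" "t \<le> t0 + \<delta>" "u l < u k"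
  shows "Xn k t < Xn l t"
proof -
  have w: "\<bar>t - t0\<bar> \<le> \<delta>" using assms(3,4) d0 by simp
  have kl: "k \<noteq> l" using assms(5) by auto
  have "X k t < X l t" using order_after[OF assms(1,2), of t] assms(3,4) d0 u_less_iff[OF assms(2,1)] assms(5) by simp
  moreover have "L k t < L l t" unfolding L_less_iff
  proof (rule mult_pos_neg)
    show "0 < real (u k) - real (u l)" using assms(5) by simp
    show "(real (u k) + real (u l)) * h - (t - t0) < 0" using usum_h(2)[OF assms(1,2) kl] assms(3) by simp
  qed
  ultimately show ?thesis unfolding Xn_I(1)[OF assms(1) w] Xn_I(1)[OF assms(2) w]
    using lam_01 by (intro convex_strict)
qed

lemma Xn_mid: assumes "k \<in> I" "\<bar>t - t0\<bar> \<le> \<delta>/2" shows "Xn k t = L k t"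
proof -
  have w: "\<bar>t - t0\<bar> \<le> \<delta>" using assms(2) d0 by simp
  show ?thesis unfolding Xn_I(1)[OF assms(1) w] lam_1[OF assms(2)] by simp
qed

lemma L_eq: assumes "k \<in> I" "l \<in> I" "k \<noteq> l" "L k t = L l t" shows "t = t0 + (real (u k) + real (u l)) * h"
proof -
  have "u k \<noteq> u l" using u_inj assms by blast
  then have "real (u k) - real (u l) \<noteq> 0" by simp
  moreover have "a * (real (u k) - real (u l)) * ((real (u k) + real (u l)) * h - (t - t0)) = 0"
    using L_diff[of k t l] assms(4) by simp
  ultimately show ?thesis using a0 by simp
qed

lemma Xn_eq: assumes "k \<in> I" "l \<in> I" "k \<noteq> l" "\<bar>t - t0\<bar> \<le> \<delta>" "Xn k t = Xn l t"
  shows "t = t0 + (real (u k) + real (u l)) * h" "\<bar>t - t0\<bar> \<le> \<delta>/2"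
proof -
  have ne: "u k \<noteq> u l" using u_inj assms by blast
  have "\<not> t < t0"
  proof
    assume "t < t0"
    then show False using Xn_before[OF assms(1,2), of t] Xn_before[OF assms(2,1), of t] ne assms(4,5)
      by (cases "u k < u l") auto
  qed
  moreover have "\<not> t0 + \<delta>/2 \<le> t"
  proof
    assume "t0 + \<delta>/2 \<le> t"
    moreover have "t \<le> t0 + \<delta>" using assms(4) by (simp add: abs_le_iff)
    ultimately show False using Xn_after[OF assms(1,2), of t] Xn_after[OF assms(2,1), of t] ne assms(5)
      by (cases "u k < u l") auto
  qed
  ultimately show m: "\<bar>t - t0\<bar> \<le> \<delta>/2" by simp
  show "t = t0 + (real (u k) + real (u l)) * h"
    using L_eq[OF assms(1-3)] assms(5) Xn_mid[OF assms(1) m] Xn_mid[OF assms(2) m] by simp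
qed


lemma gb_sn: "geom_braid m sn"
  unfolding geom_braid_def
proof (intro conjI allI impI ballI)
  show "1 \<le> m" using gb by (simp add: geom_braid_def)
next
  fix i assume i: "i < m"
  have Si: "continuous_on {0..1} (s i)" using gb i by (simp add: geom_braid_def)
  have F: "continuous_on {0..1} (\<lambda>t. X i t)" "continuous_on {0..1} (\<lambda>t. Z i t)"
    by (intro continuous_intros Si)+
  have "continuous_on {0..1} (\<lambda>t. psi t (X i t) (Z i t))"
    by (rule shiftfun.cont_psi_comp[OF shift_psi]) (intro continuous_intros F)+
  then show "continuous_on {0..1} (sn i)" unfolding sn_def by (intro continuous_intros F)
next
  fix i :: nat and t :: real assume i: "i < m" and t: "t \<in> {0..1}"
  have "0 < X i t" using gb i t by (simp add: geom_braid_def)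
  then show "0 < fst (sn i t)" unfolding sn_def using shiftfun.shift_pos[OF shift_psi] by simp
next
  fix i j :: nat and t :: real assume i: "i < m" and j: "j < m" and ij: "i \<noteq> j" and t: "t \<in> {0..1}"
  show "sn i t \<noteq> sn j t"
  proof
    assume e: "sn i t = sn j t"
    then have z: "Z i t = Z j t" using Zn[of i t] Zn[of j t] by metis
    have "X i t + psi t (X i t) (Z i t) = X j t + psi t (X j t) (Z i t)"
      using arg_cong[OF e, of fst] z by (simp add: sn_def)
    then have "X i t = X j t" by (rule shiftfun.shift_inj[OF shift_psi])
    then have "s i t = s j t" using z by (simp add: prod_eq_iff)
    then show False using gb i j ij t by (auto simp: geom_braid_def)
  qed
next
  have e0: "sn i 0 = s i 0" and e1: "sn i 1 = s i 1" for i
    using dlo dhi by (auto intro!: sn_out)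
  show "(\<lambda>i. sn i 0) ` {..<m} = (\<lambda>i. sn i 1) ` {..<m}"
    using gb unfolding e0 e1 geom_braid_def by simp
qed

lemma CT_sn: assumes "t \<in> crossing_times m sn"
  shows "t \<in> crossing_times m s \<or> (\<bar>t - t0\<bar> \<le> \<delta>/2 \<and> (\<exists>k\<in>I. \<exists>l\<in>I. t = t0 + (real (u k) + real (u l)) * h))"
proof -
  obtain i j where ij: "t \<in> {0..1}" "i < m" "j < m" "i \<noteq> j" "Xn i t = Xn j t"
    using assms unfolding crossing_times_def by auto
  show ?thesis
  proof (cases "i \<in> I \<and> j \<in> I")
    case True
    show ?thesis
    proof (cases "\<bar>t - t0\<bar> \<le> \<delta>")
      case w: True
      then show ?thesis using Xn_eq[of i j t] True ij by blast
    next
      case False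
      then have "X i t = X j t" using ij sn_out[of t] by simp
      then show ?thesis using ij unfolding crossing_times_def by auto
    qed
  next
    case False
    then have "X i t = X j t" using cmp_nb[OF ij(2,3) False] ij by simp
    then show ?thesis using ij unfolding crossing_times_def by auto
  qed
qed

lemma CT_sn_fin: "finite (crossing_times m sn)"
proof -
  have "crossing_times m sn \<subseteq> crossing_times m s \<union> (\<lambda>(k, l). t0 + (real (u k) + real (u l)) * h) ` (I \<times> I)"
    using CT_sn by fastforce
  moreover have "finite (crossing_times m s)" using good by (simp add: good_def)
  ultimately show ?thesis using finI by (meson finite_SigmaI finite_UnI finite_imageI finite_subset)
qed

lemma CT_sn_01: "crossing_times m sn \<subseteq> {0<..<1}"
proof
  fix t assume t: "t \<in> crossing_times m sn"
  have "crossing_times m s \<subseteq> {0<..<1}" using good by (simp add: good_def)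
  moreover have "\<bar>t - t0\<bar> \<le> \<delta>/2 \<Longrightarrow> t \<in> {0<..<1}" using win_01[of t] d0 by auto
  ultimately show "t \<in> {0<..<1}" using CT_sn[OF t] by blast
qed


lemma L_sign: assumes "h \<le> \<bar>t0 + (real (u i) + real (u i')) * h - t\<bar>" "\<bar>\<tau> - t\<bar> < h/2"
  shows "L i \<tau> < L i' \<tau> \<longleftrightarrow> L i t < L i' t"
proof -
  let ?A = "real (u i) - real (u i')" and ?z = "t0 + (real (u i) + real (u i')) * h"
  have e: "(real (u i) + real (u i')) * h - (x - t0) = ?z - x" for x by simp
  show ?thesis
  proof (cases "?z - t > 0")
    case True
    then have "?z - t \<ge> h" using assms(1) by simp
    then have p: "?z - \<tau> > 0" using assms(2)[unfolded abs_less_iff] by linarith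
    show ?thesis unfolding L_less_iff e using True p by (simp add: mult_less_0_iff)
  next
    case False
    then have "?z - t \<le> -h" using assms(1) by (simp add: abs_if split: if_splits)
    then have p: "?z - \<tau> < 0" and zt: "?z - t < 0" using assms(2)[unfolded abs_less_iff] h0 by linarith+
    show ?thesis unfolding L_less_iff e using zt p by (simp add: mult_less_0_iff)
  qed
qed

lemma L_cross: assumes "t = t0 + (real (u k) + real (u l)) * h" "t1 < t" "t < t2"
  shows "L k t1 < L l t1 \<longleftrightarrow> L l t2 < L k t2"
proof -
  have e1: "(real (u k) + real (u l)) * h - (t1 - t0) = t - t1" using assms(1) by simp
  have e2: "(real (u l) + real (u k)) * h - (t2 - t0) = t - t2" using assms(1) by simp
  show ?thesis unfolding L_less_iff e1 e2 using assms(2,3) by (simp add: mult_less_0_iff)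
qed

lemma caseA: assumes "\<delta> < \<bar>t - t0\<bar>" "t \<in> {0..1}" "card (strands_at m sn t y) \<ge> 2"
  shows "strands_at m sn t y = strands_at m s t y" "t \<in> crossing_times m s"
    "\<exists>\<epsilon>>0. revcond m sn t (strands_at m sn t y) \<epsilon>"
proof -
  show E: "strands_at m sn t y = strands_at m s t y"
    unfolding strands_at_def using sn_out[of t] assms(1) by simp
  obtain i j where "i \<in> strands_at m s t y" "j \<in> strands_at m s t y" "i \<noteq> j"
    using assms(3) unfolding E by (rule two_elems)
  then show CT: "t \<in> crossing_times m s" using assms(2) unfolding strands_at_def crossing_times_def by auto
  have "\<exists>\<epsilon>>0. revcond m s t (strands_at m s t y) \<epsilon>"
    using good CT assms(3) E unfolding good_def by auto
  then obtain \<epsilon> where \<epsilon>: "\<epsilon> > 0" "revcond m s t (strands_at m s t y) \<epsilon>" by blast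
  define \<epsilon>' where "\<epsilon>' = min \<epsilon> (\<bar>t - t0\<bar> - \<delta>)"
  have \<epsilon>': "\<epsilon>' > 0" "\<epsilon>' \<le> \<epsilon>" using \<epsilon> assms(1) by (auto simp: \<epsilon>'_def)
  have "revcond m sn t (strands_at m s t y) \<epsilon>'"
  proof (rule revcond_transfer[OF revcond_mono[OF \<epsilon>(2) \<epsilon>']])
    show "strands_at m s t y \<subseteq> {..<m}" by (auto simp: strands_at_def)
    fix \<tau> i k assume "\<bar>\<tau> - t\<bar> < \<epsilon>'"
    then have "\<delta> \<le> \<bar>\<tau> - t0\<bar>" unfolding \<epsilon>'_def by (simp add: abs_if split: if_splits)
    then show "(Xn k \<tau> < Xn i \<tau> \<longleftrightarrow> X k \<tau> < X i \<tau>) \<and> (Xn i \<tau> < Xn k \<tau> \<longleftrightarrow> X i \<tau> < X k \<tau>)"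
      using sn_out[of \<tau>] by simp
  qed
  then show "\<exists>\<epsilon>>0. revcond m sn t (strands_at m sn t y) \<epsilon>" using \<epsilon>' E by auto
qed

lemma caseB: assumes "\<bar>t - t0\<bar> \<le> \<delta>" "j \<in> strands_at m sn t y" "j \<notin> I" "card (strands_at m sn t y) \<ge> 2"
  shows "strands_at m sn t y = strands_at m s t y" "t \<in> crossing_times m s" "y \<noteq> x0"
    "\<exists>\<epsilon>>0. revcond m sn t (strands_at m sn t y) \<epsilon>"
proof -
  have j: "j < m" "Xn j t = y" using assms(2) by (auto simp: strands_at_def)
  have y: "y = X j t" using j Xn_J[OF j(1) assms(3)] by simp
  have "Xn i t = Xn j t \<longleftrightarrow> X i t = X j t" if "i < m" for i
    using cmp_nb[OF that j(1)] assms(3) by blast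
  then show E: "strands_at m sn t y = strands_at m s t y"
    unfolding strands_at_def using j y by auto
  obtain i i' where "i \<in> strands_at m s t y" "i' \<in> strands_at m s t y" "i \<noteq> i'"
    using assms(4) unfolding E by (rule two_elems)
  then show CT: "t \<in> crossing_times m s" using win_01[OF assms(1)] unfolding strands_at_def crossing_times_def by auto
  show "y \<noteq> x0" using win assms(1) j(1) assms(3) y r0 by fastforce
  have disj: "i \<notin> I" if "i \<in> strands_at m s t y" for i
  proof
    assume iI: "i \<in> I"
    have "\<bar>X i t - x0\<bar> \<le> r/8" using win assms(1) iI by blast
    moreover have "X i t = X j t" using that y by (simp add: strands_at_def)
    moreover have "r < \<bar>X j t - x0\<bar>" using win assms(1) j(1) assms(3) by blast
    ultimately show False using r0 by simp
  qed
  have "\<exists>\<epsilon>>0. revcond m s t (strands_at m s t y) \<epsilon>"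
    using good CT assms(4) E unfolding good_def by auto
  then obtain \<epsilon> where \<epsilon>: "\<epsilon> > 0" "revcond m s t (strands_at m s t y) \<epsilon>" by blast
  have "revcond m sn t (strands_at m s t y) \<epsilon>"
  proof (rule revcond_transfer[OF \<epsilon>(2)])
    show "strands_at m s t y \<subseteq> {..<m}" by (auto simp: strands_at_def)
    fix \<tau> i k assume "i \<in> strands_at m s t y" "k < m"
    moreover then have "i < m" "i \<notin> I" using disj by (auto simp: strands_at_def)
    ultimately show "(Xn k \<tau> < Xn i \<tau> \<longleftrightarrow> X k \<tau> < X i \<tau>) \<and> (Xn i \<tau> < Xn k \<tau> \<longleftrightarrow> X i \<tau> < X k \<tau>)"
      using cmp_nb[of k i \<tau>] cmp_nb[of i k \<tau>] by blast
  qed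
  then show "\<exists>\<epsilon>>0. revcond m sn t (strands_at m sn t y) \<epsilon>" using \<epsilon> E by auto
qed


lemma hdist: assumes "x = (real p - real q) * h" "p \<noteq> q" shows "h \<le> \<bar>x\<bar>"
proof -
  have "1 * h \<le> \<bar>real p - real q\<bar> * h" using nat_dist[OF assms(2)] h0 by (intro mult_right_mono) auto
  then show ?thesis using assms(1) h0 by (simp add: abs_mult)
qed

lemma caseC: assumes "\<bar>t - t0\<bar> \<le> \<delta>" "strands_at m sn t y \<subseteq> I" "card (strands_at m sn t y) \<ge> 2"
  shows "card (strands_at m sn t y) = 2" "\<exists>\<epsilon>>0. revcond m sn t (strands_at m sn t y) \<epsilon>"
proof -
  obtain k l where kl: "k \<in> strands_at m sn t y" "l \<in> strands_at m sn t y" "k \<noteq> l"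
    using assms(3) by (rule two_elems)
  have kI: "k \<in> I" "l \<in> I" using kl assms(2) by auto
  have ky: "Xn k t = y" "Xn l t = y" using kl by (auto simp: strands_at_def)
  have tkl: "t = t0 + (real (u k) + real (u l)) * h" and mid: "\<bar>t - t0\<bar> \<le> \<delta>/2"
    using Xn_eq[OF kI kl(3) assms(1)] ky by auto
  have ukl: "u k \<noteq> u l" using u_inj kI kl(3) by blast
  have E: "strands_at m sn t y = {k, l}"
  proof
    show "{k, l} \<subseteq> strands_at m sn t y" using kl by auto
    show "strands_at m sn t y \<subseteq> {k, l}"
    proof
      fix j assume j: "j \<in> strands_at m sn t y"
      show "j \<in> {k, l}"
      proof (rule ccontr)
        assume "j \<notin> {k, l}"
        then have jk: "j \<noteq> k" "j \<noteq> l" by auto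
        have jI: "j \<in> I" using j assms(2) by auto
        have "Xn j t = Xn k t" using j ky by (simp add: strands_at_def)
        then have "t = t0 + (real (u j) + real (u k)) * h" using Xn_eq[OF jI kI(1) jk(1) assms(1)] by simp
        then have "real (u l) * h = real (u j) * h" using tkl by simp
        then have "u j = u l" using h0 by simp
        then show False using u_inj[OF jI kI(2)] jk by simp
      qed
    qed
  qed
  then show "card (strands_at m sn t y) = 2" using kl(3) by simp
  have us: "h \<le> (real (u k) + real (u l)) * h" "(real (u k) + real (u l)) * h + h \<le> \<delta> / 2"
    using usum_h[OF kI kl(3)] by auto
  have near: "\<bar>\<tau> - t0\<bar> \<le> \<delta>/2" if "\<bar>\<tau> - t\<bar> < h/2" for \<tau>
  proof -
    have a: "- (h/2) < \<tau> - t" "\<tau> - t < h/2" using that[unfolded abs_less_iff] by linarith+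
    have "0 \<le> \<tau> - t0" "\<tau> - t0 \<le> \<delta>/2" using a us tkl h0 by linarith+
    then show ?thesis by simp
  qed
  have XL: "Xn i \<tau> = L i \<tau>" if "i \<in> I" "\<bar>\<tau> - t\<bar> < h/2" for i \<tau>
    using Xn_mid[OF that(1) near[OF that(2)]] .
  have Lkl: "L k t = L l t" using ky XL[OF kI(1), of t] XL[OF kI(2), of t] h0 by simp
  have side: "(\<forall>i\<in>{k, l}. Xn k' \<tau> < Xn i \<tau>) \<or> (\<forall>i\<in>{k, l}. Xn i \<tau> < Xn k' \<tau>)"
    if k': "k' < m" "k' \<notin> {k, l}" and \<tau>: "\<bar>\<tau> - t\<bar> < h/2" for k' \<tau>
  proof (cases "k' \<in> I")
    case True
    have d1: "h \<le> \<bar>t0 + (real (u k') + real (u k)) * h - t\<bar>"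
      by (rule hdist[of _ "u k'" "u l"]) (use tkl u_inj[OF True kI(2)] k' in \<open>auto simp: algebra_simps\<close>)
    have d2: "h \<le> \<bar>t0 + (real (u k') + real (u l)) * h - t\<bar>"
      by (rule hdist[of _ "u k'" "u k"]) (use tkl u_inj[OF True kI(1)] k' in \<open>auto simp: algebra_simps\<close>)
    have d3: "h \<le> \<bar>t0 + (real (u k) + real (u k')) * h - t\<bar>" using d1 by (simp add: add.commute)
    have d4: "h \<le> \<bar>t0 + (real (u l) + real (u k')) * h - t\<bar>" using d2 by (simp add: add.commute)
    have ne: "L k' t \<noteq> L k t"
    proof
      assume "L k' t = L k t"
      then have "t = t0 + (real (u k') + real (u k)) * h" using L_eq[OF True kI(1)] k' by auto
      then show False using d1 h0 by simp
    qed
    show ?thesis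
    proof (cases "L k' t < L k t")
      case True
      then have "L k' \<tau> < L k \<tau>" "L k' \<tau> < L l \<tau>" using L_sign[OF d1 \<tau>] L_sign[OF d2 \<tau>] Lkl by auto
      then show ?thesis using XL[OF kI(1) \<tau>] XL[OF kI(2) \<tau>] XL[OF \<open>k' \<in> I\<close> \<tau>] by simp
    next
      case False
      then have "L k t < L k' t" using ne by simp
      then have "L k \<tau> < L k' \<tau>" "L l \<tau> < L k' \<tau>" using L_sign[OF d3 \<tau>] L_sign[OF d4 \<tau>] Lkl by auto
      then show ?thesis using XL[OF kI(1) \<tau>] XL[OF kI(2) \<tau>] XL[OF \<open>k' \<in> I\<close> \<tau>] by simp
    qed
  next
    case False
    have w: "\<bar>\<tau> - t0\<bar> \<le> \<delta>" using near[OF \<tau>] d0 by simp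
    have far: "r < \<bar>X k' \<tau> - x0\<bar>" using win w k'(1) False by blast
    have n1: "\<bar>Xn k \<tau> - x0\<bar> \<le> r/8" "\<bar>Xn l \<tau> - x0\<bar> \<le> r/8" using Xn_I_near[OF _ w] kI by auto
    have "Xn k' \<tau> = X k' \<tau>" using Xn_J[OF k'(1) False] by simp
    then show ?thesis using far n1 r0 by (cases "X k' \<tau> < x0") (auto simp: abs_if split: if_splits)
  qed
  have "revcond m sn t {k, l} (h/2)"
    unfolding revcond_def
  proof (intro ballI conjI allI impI)
    fix t1 t2 assume t1: "t1 \<in> {t - h/2<..<t}" and t2: "t2 \<in> {t<..<t + h/2}"
    have a1: "\<bar>t1 - t\<bar> < h/2" and a2: "\<bar>t2 - t\<bar> < h/2" using t1 t2 by auto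
    {
      fix i j assume ij: "i \<in> {k, l}" "j \<in> {k, l}"
      have iI: "i \<in> I" "j \<in> I" using ij kI by auto
      have "L i t1 < L j t1 \<longleftrightarrow> L j t2 < L i t2"
      proof -
        consider "i = j" | "i = k" "j = l" | "i = l" "j = k" using ij by auto
        then show ?thesis
        proof cases
          case 2 then show ?thesis using L_cross[OF tkl, of t1 t2] t1 t2 by simp
        next
          case 3
          have "t = t0 + (real (u l) + real (u k)) * h" using tkl by simp
          then show ?thesis using L_cross[of t l k t1 t2] t1 t2 3 by simp
        qed simp
      qed
      then show "Xn i t1 < Xn j t1 \<longleftrightarrow> Xn j t2 < Xn i t2"
        using XL[OF iI(1) a1] XL[OF iI(2) a1] XL[OF iI(1) a2] XL[OF iI(2) a2] by simp
    }
    fix k' assume "k' < m" "k' \<notin> {k, l}"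
    then show "(\<forall>i\<in>{k, l}. Xn k' t1 < Xn i t1) \<or> (\<forall>i\<in>{k, l}. Xn i t1 < Xn k' t1)"
      "(\<forall>i\<in>{k, l}. Xn k' t2 < Xn i t2) \<or> (\<forall>i\<in>{k, l}. Xn i t2 < Xn k' t2)"
      using side a1 a2 by blast+
  qed
  then show "\<exists>\<epsilon>>0. revcond m sn t (strands_at m sn t y) \<epsilon>" unfolding E using h0 by (intro exI[of _ "h/2"]) auto
qed


lemma good_sn: "good m sn"
  unfolding good_def
proof (intro conjI ballI allI impI)
  show "geom_braid m sn" by (rule gb_sn)
  show "finite (crossing_times m sn)" by (rule CT_sn_fin)
  show "crossing_times m sn \<subseteq> {0<..<1}" by (rule CT_sn_01)
  fix t y assume t: "t \<in> crossing_times m sn" and c: "2 \<le> card (strands_at m sn t y)"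
  have t01: "t \<in> {0..1}" using CT_sn_01 t by auto
  show "\<exists>\<epsilon>>0. revcond m sn t (strands_at m sn t y) \<epsilon>"
  proof (cases "\<delta> < \<bar>t - t0\<bar>")
    case True then show ?thesis using caseA(3)[OF True t01 c] by blast
  next
    case False
    then have w: "\<bar>t - t0\<bar> \<le> \<delta>" by simp
    show ?thesis
    proof (cases "strands_at m sn t y \<subseteq> I")
      case True then show ?thesis using caseC(2)[OF w True c] by blast
    next
      case False
      then obtain j where "j \<in> strands_at m sn t y" "j \<notin> I" by blast
      then show ?thesis using caseB(4)[OF w _ _ c] by blast
    qed
  qed
qed

lemma bad_sn: "badset m sn \<subseteq> badset m s - {(t0, x0)}"
proof
  fix p assume "p \<in> badset m sn"
  then obtain t y where p: "p = (t, y)" "t \<in> crossing_times m sn" "3 \<le> card (strands_at m sn t y)"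
    unfolding badset_def by auto
  have c: "2 \<le> card (strands_at m sn t y)" using p by simp
  have t01: "t \<in> {0..1}" using CT_sn_01 p by auto
  show "p \<in> badset m s - {(t0, x0)}"
  proof (cases "\<delta> < \<bar>t - t0\<bar>")
    case True
    then have "t \<noteq> t0" using d0 by auto
    then show ?thesis using caseA(1,2)[OF True t01 c] p unfolding badset_def by auto
  next
    case False
    then have w: "\<bar>t - t0\<bar> \<le> \<delta>" by simp
    show ?thesis
    proof (cases "strands_at m sn t y \<subseteq> I")
      case True then show ?thesis using caseC(1)[OF w True c] p by simp
    next
      case False
      then obtain j where "j \<in> strands_at m sn t y" "j \<notin> I" by blast
      then show ?thesis using caseB(1,2,3)[OF w _ _ c] p unfolding badset_def by auto
    qed
  qed
qed

lemma iso_sn: assumes "isotopic (braid_closure m s) L0" shows "isotopic (braid_closure m sn) L0"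
proof -
  have pos: "\<forall>i<m. \<forall>t\<in>{0..1}. fst (sn i t) > 0" using gb_sn by (simp add: geom_braid_def)
  obtain G :: "real \<times> pt3 \<Rightarrow> pt3" where G: "continuous_on ({0..1} \<times> UNIV) G \<and>
      (\<forall>t\<in>{0..1}. \<exists>g. homeomorphism UNIV UNIV (\<lambda>x. G (t, x)) g) \<and>
      (\<forall>x. G (0, x) = x) \<and>
      (\<lambda>x. G (1, x)) ` braid_closure m sn
       = braid_closure m (\<lambda>i t. (fst (sn i t) + - psi t (fst (sn i t)) (snd (sn i t)), snd (sn i t)))"
    using shiftfun.shift_isotopy[OF shift_mpsi pos] by (elim exE) assumption
  have bc: "braid_closure m (\<lambda>i t. (fst (sn i t) + - psi t (fst (sn i t)) (snd (sn i t)), snd (sn i t))) = braid_closure m s"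
  proof (rule braid_closure_cong)
    fix i :: nat and t :: real assume "i < m" "t \<in> {0..1}"
    then show "(fst (sn i t) + - psi t (fst (sn i t)) (snd (sn i t)), snd (sn i t)) = s i t"
      using sn_back[of i t] by (simp only: Zn)
  qed
  have img: "(\<lambda>x. G (1, x)) ` braid_closure m sn = braid_closure m s"
    using conjunct2[OF conjunct2[OF conjunct2[OF G]]] bc by (rule trans)
  show ?thesis
    by (rule isotopic_pre[OF conjunct1[OF G] conjunct1[OF conjunct2[OF G]]
          conjunct1[OF conjunct2[OF conjunct2[OF G]]] img assms])
qed

end




lemma cont_ev: fixes f :: "real \<Rightarrow> real \<times> real" and t0 e :: real
  assumes "continuous_on {0..1} f" "t0 \<in> {0<..<1}" "0 < e"
  shows "eventually (\<lambda>t. \<bar>fst (f t) - fst (f t0)\<bar> < e) (at t0)"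
    "eventually (\<lambda>t. \<bar>snd (f t) - snd (f t0)\<bar> < e) (at t0)"
proof -
  have "t0 \<in> interior {0..1::real}" using assms(2) by simp
  then have "continuous (at t0) f" using continuous_on_interior[OF assms(1)] by blast
  then have L: "(f \<longlongrightarrow> f t0) (at t0)" by (simp add: continuous_at)
  show "eventually (\<lambda>t. \<bar>fst (f t) - fst (f t0)\<bar> < e) (at t0)"
    using tendstoD[OF tendsto_fst[OF L] assms(3)] by (simp add: dist_real_def)
  show "eventually (\<lambda>t. \<bar>snd (f t) - snd (f t0)\<bar> < e) (at t0)"
    using tendstoD[OF tendsto_snd[OF L] assms(3)] by (simp add: dist_real_def)
qed

lemma pos_min: fixes f :: "'a \<Rightarrow> real" assumes "finite A" "\<forall>a\<in>A. 0 < f a" "0 < c"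
  obtains r where "0 < r" "r \<le> c" "\<forall>a\<in>A. r \<le> f a"
proof -
  let ?S = "insert c (f ` A)"
  have "finite ?S" using assms by simp
  then have "0 < Min ?S" using assms by (subst Min_gr_iff) auto
  moreover have "Min ?S \<le> c" "\<forall>a\<in>A. Min ?S \<le> f a" using \<open>finite ?S\<close> by auto
  ultimately show ?thesis using that by blast
qed

lemma step:
  assumes good: "good m s" and bad: "(t0, x0) \<in> badset m s"
  shows "\<exists>s'. good m s' \<and> badset m s' \<subseteq> badset m s - {(t0, x0)} \<and>
     (\<forall>L. isotopic (braid_closure m s) L \<longrightarrow> isotopic (braid_closure m s') L)"
proof -
  define I where "I = strands_at m s t0 x0"
  have t0CT: "t0 \<in> crossing_times m s" and c3: "3 \<le> card I" using bad by (auto simp: badset_def I_def)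
  have gb: "geom_braid m s" and finCT: "finite (crossing_times m s)" and CT01: "crossing_times m s \<subseteq> {0<..<1}"
    using good by (auto simp: good_def)
  have t0: "t0 \<in> {0<..<1}" using t0CT CT01 by auto
  have "\<exists>\<epsilon>>0. revcond m s t0 I \<epsilon>" using good t0CT c3 unfolding good_def I_def by auto
  then obtain \<epsilon>0 where e0: "\<epsilon>0 > 0" "revcond m s t0 I \<epsilon>0" by blast
  have sub: "I \<subseteq> {..<m}" and XI: "\<And>k. k \<in> I \<Longrightarrow> fst (s k t0) = x0" by (auto simp: I_def strands_at_def)
  have finI: "finite I" using sub finite_subset by blast
  have "I \<noteq> {}" using c3 by auto
  then obtain k0 where "k0 \<in> I" by blast
  then have x0: "0 < x0" using gb sub XI[of k0] t0 by (force simp: geom_braid_def)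
  define J where "J = {j. j < m \<and> j \<notin> I}"
  have finJ: "finite J" by (simp add: J_def)
  have Jpos: "\<forall>j\<in>J. 0 < \<bar>fst (s j t0) - x0\<bar> / 4" by (auto simp: J_def I_def strands_at_def)
  obtain r where r: "0 < r" "r \<le> x0 / 4" "\<forall>j\<in>J. r \<le> \<bar>fst (s j t0) - x0\<bar> / 4"
    using pos_min[OF finJ Jpos, of "x0/4"] x0 by auto
  define P where "P = {(k, l). k \<in> I \<and> l \<in> I \<and> k \<noteq> l}"
  have finP: "finite P" unfolding P_def using finI by (auto intro: finite_subset[of _ "I \<times> I"])
  have Ppos: "\<forall>p\<in>P. 0 < \<bar>snd (s (fst p) t0) - snd (s (snd p) t0)\<bar>"
  proof
    fix p assume "p \<in> P"
    then obtain k l where p: "p = (k, l)" "k \<in> I" "l \<in> I" "k \<noteq> l" by (auto simp: P_def)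
    have km: "k < m" "l < m" using sub p by auto
    have "\<forall>i<m. \<forall>j<m. i \<noteq> j \<longrightarrow> (\<forall>t\<in>{0..1}. s i t \<noteq> s j t)" using gb by (simp add: geom_braid_def)
    moreover have "t0 \<in> {0..1}" using t0 by auto
    ultimately have "s k t0 \<noteq> s l t0" using km p(4) by blast
    moreover have "fst (s k t0) = fst (s l t0)" using XI p by simp
    ultimately have "snd (s k t0) \<noteq> snd (s l t0)" by (auto simp: prod_eq_iff)
    then show "0 < \<bar>snd (s (fst p) t0) - snd (s (snd p) t0)\<bar>" using p by simp
  qed
  obtain g where g: "0 < g" "\<forall>p\<in>P. g \<le> \<bar>snd (s (fst p) t0) - snd (s (snd p) t0)\<bar>"
    using pos_min[OF finP Ppos, of 1] by auto
  have cs: "continuous_on {0..1} (s i)" if "i < m" for i using gb that by (simp add: geom_braid_def)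
  have ev1: "eventually (\<lambda>t. \<forall>k\<in>I. \<bar>fst (s k t) - fst (s k t0)\<bar> < r/8) (at t0)"
    using sub r(1) by (intro eventually_ball_finite finI ballI cont_ev(1)[OF cs t0]) auto
  have ev2: "eventually (\<lambda>t. \<forall>k\<in>I. \<bar>snd (s k t) - snd (s k t0)\<bar> < g/4) (at t0)"
    using sub g(1) by (intro eventually_ball_finite finI ballI cont_ev(2)[OF cs t0]) auto
  have ev3: "eventually (\<lambda>t. \<forall>j\<in>J. \<bar>fst (s j t) - fst (s j t0)\<bar> < r) (at t0)"
    using r(1) by (intro eventually_ball_finite finJ ballI cont_ev(1)[OF cs t0]) (auto simp: J_def)
  have ev4: "eventually (\<lambda>t. \<forall>c\<in>crossing_times m s. t \<noteq> c) (at t0)"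
    by (intro eventually_ball_finite finCT ballI eventually_neq_at_within)
  obtain d where d: "d > 0" "\<forall>t. t \<noteq> t0 \<and> dist t t0 < d \<longrightarrow>
      (\<forall>k\<in>I. \<bar>fst (s k t) - fst (s k t0)\<bar> < r/8) \<and> (\<forall>k\<in>I. \<bar>snd (s k t) - snd (s k t0)\<bar> < g/4) \<and>
      (\<forall>j\<in>J. \<bar>fst (s j t) - fst (s j t0)\<bar> < r) \<and> (\<forall>c\<in>crossing_times m s. t \<noteq> c)"
    using eventually_conj[OF ev1 eventually_conj[OF ev2 eventually_conj[OF ev3 ev4]]]
    unfolding eventually_at by auto
  define \<delta> where "\<delta> = min (d/2) (min (\<epsilon>0/2) (min (t0/2) ((1 - t0)/2)))"
  have dle: "\<delta> \<le> d/2" "\<delta> \<le> \<epsilon>0/2" "\<delta> \<le> t0/2" "\<delta> \<le> (1 - t0)/2" unfolding \<delta>_def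
    by (rule min.cobounded1, rule min.coboundedI2, rule min.cobounded1,
        rule min.coboundedI2, rule min.coboundedI2, rule min.cobounded1,
        rule min.coboundedI2, rule min.coboundedI2, rule min.cobounded2)
  have dpos: "0 < \<delta>" unfolding \<delta>_def using d e0 t0 by auto
  have \<delta>: "0 < \<delta>" "\<delta> < d" "\<delta> < \<epsilon>0" "0 < t0 - \<delta>" "t0 + \<delta> < 1"
    using dle dpos d e0 t0 by auto
  interpret C: stepctx m s t0 x0 I \<epsilon>0 r g \<delta>
  proof
    show "good m s" by fact
    show "t0 \<in> crossing_times m s" by fact
    show "I = strands_at m s t0 x0" by (simp add: I_def)
    show "2 \<le> card I" using c3 by simp
    show "0 < \<epsilon>0" "revcond m s t0 I \<epsilon>0" using e0 by auto
    show "0 < r" "r < x0 / 2" using r x0 by auto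
    show "\<forall>j<m. j \<notin> I \<longrightarrow> 2 * r < \<bar>fst (s j t0) - x0\<bar>"
      using r(1,3) by (auto simp: J_def)
    show "0 < g" using g by simp
    show "\<forall>k\<in>I. \<forall>l\<in>I. k \<noteq> l \<longrightarrow> g \<le> \<bar>snd (s k t0) - snd (s l t0)\<bar>"
      using g(2) by (auto simp: P_def)
    show "0 < \<delta>" "0 < t0 - \<delta>" "t0 + \<delta> < 1" "\<delta> < \<epsilon>0" using \<delta> by auto
    show "\<forall>t. \<bar>t - t0\<bar> \<le> \<delta> \<longrightarrow> (\<forall>k\<in>I. \<bar>fst (s k t) - x0\<bar> \<le> r/8 \<and> \<bar>snd (s k t) - snd (s k t0)\<bar> \<le> g/4)
      \<and> (\<forall>j<m. j \<notin> I \<longrightarrow> r < \<bar>fst (s j t) - x0\<bar>) \<and> (t \<noteq> t0 \<longrightarrow> t \<notin> crossing_times m s)"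
    proof (intro allI impI)
      fix t assume tt: "\<bar>t - t0\<bar> \<le> \<delta>"
      show "(\<forall>k\<in>I. \<bar>fst (s k t) - x0\<bar> \<le> r/8 \<and> \<bar>snd (s k t) - snd (s k t0)\<bar> \<le> g/4)
      \<and> (\<forall>j<m. j \<notin> I \<longrightarrow> r < \<bar>fst (s j t) - x0\<bar>) \<and> (t \<noteq> t0 \<longrightarrow> t \<notin> crossing_times m s)"
      proof (cases "t = t0")
        case True
        have "\<forall>j<m. j \<notin> I \<longrightarrow> r < \<bar>fst (s j t) - x0\<bar>"
        proof (intro allI impI)
          fix j assume "j < m" "j \<notin> I"
          then have "r \<le> \<bar>fst (s j t0) - x0\<bar> / 4" using r(3) by (auto simp: J_def)
          then show "r < \<bar>fst (s j t) - x0\<bar>" using r(1) True by simp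
        qed
        then show ?thesis using True XI r(1) g(1) by simp
      next
        case False
        then have D: "(\<forall>k\<in>I. \<bar>fst (s k t) - fst (s k t0)\<bar> < r/8) \<and> (\<forall>k\<in>I. \<bar>snd (s k t) - snd (s k t0)\<bar> < g/4) \<and>
          (\<forall>j\<in>J. \<bar>fst (s j t) - fst (s j t0)\<bar> < r) \<and> (\<forall>c\<in>crossing_times m s. t \<noteq> c)"
          using d(2) tt \<delta>(2) by (simp add: dist_real_def)
        have A: "\<forall>k\<in>I. \<bar>fst (s k t) - x0\<bar> \<le> r/8 \<and> \<bar>snd (s k t) - snd (s k t0)\<bar> \<le> g/4"
          using D XI by (simp add: less_imp_le)
        have B: "\<forall>j<m. j \<notin> I \<longrightarrow> r < \<bar>fst (s j t) - x0\<bar>"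
        proof (intro allI impI)
          fix j assume "j < m" "j \<notin> I"
          then have jJ: "j \<in> J" by (simp add: J_def)
          then have "4 * r \<le> \<bar>fst (s j t0) - x0\<bar>" using r(3) by auto
          moreover have "\<bar>fst (s j t) - fst (s j t0)\<bar> < r" using D jJ by blast
          moreover have "\<bar>fst (s j t0) - x0\<bar> \<le> \<bar>fst (s j t) - x0\<bar> + \<bar>fst (s j t) - fst (s j t0)\<bar>"
          proof -
            have e: "(fst (s j t) - x0) - (fst (s j t) - fst (s j t0)) = fst (s j t0) - x0" by simp
            have "\<bar>(fst (s j t) - x0) - (fst (s j t) - fst (s j t0))\<bar> \<le> \<bar>fst (s j t) - x0\<bar> + \<bar>fst (s j t) - fst (s j t0)\<bar>"
              by (rule abs_triangle_ineq4)
            then show ?thesis by (simp only: e)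
          qed
          ultimately show "r < \<bar>fst (s j t) - x0\<bar>" using r(1) by linarith
        qed
        show ?thesis using A B D by blast
      qed
    qed
  qed
  show ?thesis
    using C.good_sn C.bad_sn C.iso_sn by blast
qed

lemma reduce: "good m s \<Longrightarrow> \<exists>s'. good m s' \<and> badset m s' = {} \<and>
     (\<forall>L. isotopic (braid_closure m s) L \<longrightarrow> isotopic (braid_closure m s') L)"
proof (induction "card (badset m s)" arbitrary: s rule: less_induct)
  case less
  show ?case
  proof (cases "badset m s = {}")
    case True then show ?thesis using less.prems by blast
  next
    case False
    then obtain p where p: "p \<in> badset m s" by blast
    obtain t0 x0 where pp: "p = (t0, x0)" by (cases p)
    obtain s1 where s1: "good m s1" "badset m s1 \<subseteq> badset m s - {(t0, x0)}"
      "\<forall>L. isotopic (braid_closure m s) L \<longrightarrow> isotopic (braid_closure m s1) L"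
      using step[OF less.prems, of t0 x0] p pp by blast
    have fin: "finite (badset m s)" using less.prems badset_finite by (simp add: good_def)
    have "badset m s1 \<subset> badset m s" using s1(2) p pp by blast
    then have "card (badset m s1) < card (badset m s)" using psubset_card_mono[OF fin] by blast
    then obtain s2 where "good m s2" "badset m s2 = {}"
      "\<forall>L. isotopic (braid_closure m s1) L \<longrightarrow> isotopic (braid_closure m s2) L"
      using less.hyps s1(1) by blast
    then show ?thesis using s1(3) by blast
  qed
qed



theorem theorem5p1:
  fixes L :: "pt3 set" and n :: nat
  assumes "is_link L" and "n \<ge> 2"
  shows "crossing_braid_index 2 L \<le> crossing_braid_index n L"
  unfolding crossing_braid_index_def
proof (rule Inf_superset_mono, rule subsetI)
  fix e assume "e \<in> {enat m |m. \<exists>s. n_crossing_braid n m s \<and> isotopic (braid_closure m s) L}"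
  then obtain m s where ms: "e = enat m" "n_crossing_braid n m s" "isotopic (braid_closure m s) L" by blast
  obtain s' where s': "good m s'" "badset m s' = {}"
    "\<forall>L. isotopic (braid_closure m s) L \<longrightarrow> isotopic (braid_closure m s') L"
    using reduce[OF ncb_good[OF ms(2)]] by blast
  have "n_crossing_braid 2 m s'" using good_2cb[OF s'(1,2)] .
  moreover have "isotopic (braid_closure m s') L" using s'(3) ms(3) by blast
  ultimately show "e \<in> {enat m |m. \<exists>s. n_crossing_braid 2 m s \<and> isotopic (braid_closure m s) L}"
    using ms(1) by blast
qed

end
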